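(* Let $\Gamma$ be a weighted digraph with vertex set $V=\{1,\dots,n\}$ and arc set $E$, out-forest dimension $d$ and normalized matrix of maximum out-forests $\bar J$. Let $K$ be the vertex set of a basis bicomponent of $\Gamma$; let $K^+$ be the set of vertices reachable by directed paths from $K$ and unreachable from all other basis bicomponents; let $\widetilde K$ be the union of the vertex sets of all basis bicomponents. Let $\mathsf T$ be the set of spanning diverging trees of the restriction $\Gamma_K$ of $\Gamma$ to $K$, and $\mathsf T^j\subseteq\mathsf T$ those diverging from (rooted at) $j$. Let $\Gamma_{-K}$ be the spanning subgraph of $\Gamma$ with arc set $E\setminus E(\Gamma_K)$, and $\mathsf P^{K\to i}$ the set of maximum out-forests of $\Gamma_{-K}$ in which $i$ is reachable from some vertex of $K$. Let $\varepsilon(\cdot)$ denote the weight of a set of subgraphs (sum of weights of its elements) and $\sigma_{n-d}$ the total weight of the maximum out-forests of $\Gamma$. Then: (1) $\bar J$ is row stochastic: $\bar J_{ij}\ge0$ for all $i,j$ and $\sum_{k=1}^n\bar J_{ik}=1$ for all $i$; (2) $\bar J_{ij}\ne0$ if and only if $j\in\widetilde K$ and $i$ is reachable from $j$ in $\Gamma$; (3) if $j\in K$, then for every $i\in V$, $\bar J_{ij}=\varepsilon(\mathsf T^j)\,\varepsilon(\mathsf P^{K\to i})/\sigma_{n-d}$; moreover, if $i\in K^+$ then $\bar J_{ij}=\bar J_{jj}=\varepsilon(\mathsf T^j)/\varepsilon(\mathsf T)$; (4) $\sum_{j\in K}\bar J_{jj}=1$; in particular, if $j$ is an undominated vertex then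 $\bar J_{jj}=1$; (5) if $j_1,j_2\in K$, then the columns satisfy $\bar J_{\cdot j_2}=\big(\varepsilon(\mathsf T^{j_2})/\varepsilon(\mathsf T^{j_1})\big)\bar J_{\cdot j_1}$.
   Context: A weighted digraph $\Gamma$ has no loops and each arc $j\to i$ ($j\ne i$) has a positive weight. A diverging tree is a rooted directed tree with directed paths from its root to all its other vertices; an out-forest of a digraph is a spanning subgraph whose weak components are diverging trees; a maximum out-forest is one with the maximum number of arcs; the out-forest dimension $d$ is the number of trees in a maximum out-forest. The weight of a subgraph is the product of its arc weights (the empty product is $1$). The normalized matrix of maximum out-forests $\bar J$ has $\bar J_{ij}$ equal to the total weight of the maximum out-forests of $\Gamma$ in which $i$ belongs to the tree rooted at $j$, divided by the total weight of all maximum out-forests. A basis bicomponent is a strong component into which no arc enters from outside it; an undominated vertex is a vertex forming by itself a basis bicomponent. Every vertex is reachable from itself. *)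

theory Defs
  imports Complex_Main
begin

text \<open>A weighted digraph on a finite vertex set V: arc set E of pairs (j,i) meaning j \<rightarrow> i,
  weight function w on arcs. Subgraphs (spanning) are given by their arc sets.\<close>

definition sg_weight :: "('a \<times> 'a \<Rightarrow> real) \<Rightarrow> ('a \<times> 'a) set \<Rightarrow> real" where
  "sg_weight w F = (\<Prod>a\<in>F. w a)"

definition set_weight :: "('a \<times> 'a \<Rightarrow> real) \<Rightarrow> ('a \<times> 'a) set set \<Rightarrow> real" where
  "set_weight w S = (\<Sum>F\<in>S. sg_weight w F)"

definition diverging_tree_at :: "'a set \<Rightarrow> ('a \<times> 'a) set \<Rightarrow> 'a \<Rightarrow> bool" where
  "diverging_tree_at C T r \<longleftrightarrow> finite C \<and> T \<subseteq> C \<times> C \<and> r \<in> C \<and>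
     (\<forall>v\<in>C. (r, v) \<in> T\<^sup>*) \<and> card T = card C - 1"

definition diverging_tree :: "'a set \<Rightarrow> ('a \<times> 'a) set \<Rightarrow> bool" where
  "diverging_tree C T \<longleftrightarrow> (\<exists>r. diverging_tree_at C T r)"

definition wcomp :: "'a set \<Rightarrow> ('a \<times> 'a) set \<Rightarrow> 'a \<Rightarrow> 'a set" where
  "wcomp V F v = {u\<in>V. (v, u) \<in> (F \<union> F\<inverse>)\<^sup>*}"

definition out_forest :: "'a set \<Rightarrow> ('a \<times> 'a) set \<Rightarrow> ('a \<times> 'a) set \<Rightarrow> bool" where
  "out_forest V E F \<longleftrightarrow> F \<subseteq> E \<and>
     (\<forall>v\<in>V. diverging_tree (wcomp V F v) (F \<inter> (wcomp V F v \<times> wcomp V F v)))"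

definition max_out_forests :: "'a set \<Rightarrow> ('a \<times> 'a) set \<Rightarrow> ('a \<times> 'a) set set" where
  "max_out_forests V E = {F. out_forest V E F \<and>
     (\<forall>F'. out_forest V E F' \<longrightarrow> card F' \<le> card F)}"

definition in_tree_rooted :: "'a set \<Rightarrow> ('a \<times> 'a) set \<Rightarrow> 'a \<Rightarrow> 'a \<Rightarrow> bool" where
  "in_tree_rooted V F i j \<longleftrightarrow>
     diverging_tree_at (wcomp V F i) (F \<inter> (wcomp V F i \<times> wcomp V F i)) j"

definition sigma_max :: "'a set \<Rightarrow> ('a \<times> 'a) set \<Rightarrow> ('a \<times> 'a \<Rightarrow> real) \<Rightarrow> real" where
  "sigma_max V E w = set_weight w (max_out_forests V E)"

definition Jbar :: "'a set \<Rightarrow> ('a \<times> 'a) set \<Rightarrow> ('a \<times> 'a \<Rightarrow> real) \<Rightarrow> 'a \<Rightarrow> 'a \<Rightarrow> real" where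
  "Jbar V E w i j =
     set_weight w {F\<in>max_out_forests V E. in_tree_rooted V F i j} / sigma_max V E w"

definition scomp :: "'a set \<Rightarrow> ('a \<times> 'a) set \<Rightarrow> 'a \<Rightarrow> 'a set" where
  "scomp V E v = {u\<in>V. (v, u) \<in> E\<^sup>* \<and> (u, v) \<in> E\<^sup>*}"

definition basis_bicomp :: "'a set \<Rightarrow> ('a \<times> 'a) set \<Rightarrow> 'a set \<Rightarrow> bool" where
  "basis_bicomp V E K \<longleftrightarrow> (\<exists>v\<in>V. K = scomp V E v) \<and>
     (\<forall>(a, b)\<in>E. b \<in> K \<longrightarrow> a \<in> K)"

definition undominated :: "'a set \<Rightarrow> ('a \<times> 'a) set \<Rightarrow> 'a \<Rightarrow> bool" where
  "undominated V E j \<longleftrightarrow> basis_bicomp V E {j}"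

definition K_plus :: "'a set \<Rightarrow> ('a \<times> 'a) set \<Rightarrow> 'a set \<Rightarrow> 'a set" where
  "K_plus V E K = {i\<in>V. (\<exists>k\<in>K. (k, i) \<in> E\<^sup>*) \<and>
     (\<forall>K'. basis_bicomp V E K' \<and> K' \<noteq> K \<longrightarrow> (\<forall>k\<in>K'. (k, i) \<notin> E\<^sup>*))}"

definition K_tilde :: "'a set \<Rightarrow> ('a \<times> 'a) set \<Rightarrow> 'a set" where
  "K_tilde V E = \<Union>{K. basis_bicomp V E K}"

definition trees_K :: "('a \<times> 'a) set \<Rightarrow> 'a set \<Rightarrow> ('a \<times> 'a) set set" where
  "trees_K E K = {T. T \<subseteq> E \<inter> (K \<times> K) \<and> diverging_tree K T}"

definition trees_K_at :: "('a \<times> 'a) set \<Rightarrow> 'a set \<Rightarrow> 'a \<Rightarrow> ('a \<times> 'a) set set" where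
  "trees_K_at E K j = {T. T \<subseteq> E \<inter> (K \<times> K) \<and> diverging_tree_at K T j}"

definition P_K_to :: "'a set \<Rightarrow> ('a \<times> 'a) set \<Rightarrow> 'a set \<Rightarrow> 'a \<Rightarrow> ('a \<times> 'a) set set" where
  "P_K_to V E K i = {F\<in>max_out_forests V (E - E \<inter> (K \<times> K)). \<exists>k\<in>K. (k, i) \<in> F\<^sup>*}"

end

theory Submission
  imports Defs
begin


definition indeg1 :: "('a \<times> 'a) set \<Rightarrow> bool" where
  "indeg1 F \<longleftrightarrow> (\<forall>a b c. (a,c)\<in>F \<longrightarrow> (b,c)\<in>F \<longrightarrow> a = b)"
definition isroot :: "('a \<times> 'a) set \<Rightarrow> 'a \<Rightarrow> bool" where
  "isroot F x \<longleftrightarrow> (\<forall>u. (u,x) \<notin> F)"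
definition forest :: "'a set \<Rightarrow> ('a \<times> 'a) set \<Rightarrow> bool" where
  "forest V F \<longleftrightarrow> F \<subseteq> V \<times> V \<and> indeg1 F \<and> acyclic F"
definition roots :: "'a set \<Rightarrow> ('a \<times> 'a) set \<Rightarrow> 'a set" where
  "roots V F = {v\<in>V. isroot F v}"

lemma chain:
  assumes "indeg1 F" "(a,x)\<in>F\<^sup>*"
  shows "(b,x)\<in>F\<^sup>* \<Longrightarrow> (a,b)\<in>F\<^sup>* \<or> (b,a)\<in>F\<^sup>*"
  using assms(2)
proof (induction x arbitrary: b rule: rtrancl_induct)
  case base then show ?case by simp
next
  case (step y z)
  from step.prems show ?case
  proof (cases rule: rtranclE)
    case base then show ?thesis using step.hyps by auto
  next
    case (step y')
    then have "y' = y" using assms(1) \<open>(y,z)\<in>F\<close> unfolding indeg1_def by blast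
    then show ?thesis using step.IH step by auto
  qed
qed

lemma root_reach: "isroot F r \<Longrightarrow> (x,r)\<in>F\<^sup>* \<Longrightarrow> x = r"
  by (erule rtranclE) (auto simp: isroot_def)

lemma roots_eq:
  assumes "indeg1 F" "isroot F r" "isroot F r'" "(r,v)\<in>F\<^sup>*" "(r',v)\<in>F\<^sup>*"
  shows "r = r'"
  using chain[OF assms(1) assms(4) assms(5)] root_reach assms(2,3) by metis

lemma acyc_crit:
  assumes "F \<subseteq> V \<times> V" "indeg1 F" "\<forall>v\<in>V. \<exists>r. isroot F r \<and> (r,v)\<in>F\<^sup>*"
  shows "acyclic F"
proof -
  have claim: "(r,u)\<in>F\<^sup>* \<Longrightarrow> isroot F r \<Longrightarrow> (u,u)\<notin>F\<^sup>+" for r u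
  proof (induction u rule: rtrancl_induct)
    case base
    show ?case
    proof
      assume "(r,r)\<in>F\<^sup>+"
      then obtain x where "(x,r)\<in>F" by (meson tranclD2)
      with base show False by (auto simp: isroot_def)
    qed
  next
    case (step y z)
    show ?case
    proof
      assume "(z,z)\<in>F\<^sup>+"
      then obtain x where x: "(z,x)\<in>F\<^sup>*" "(x,z)\<in>F" by (meson tranclD2)
      then have "x = y" using assms(2) step.hyps(2) unfolding indeg1_def by blast
      then have "(y,y)\<in>F\<^sup>+" using x step.hyps(2) by (meson rtrancl_into_trancl2)
      with step show False by auto
    qed
  qed
  show ?thesis unfolding acyclic_def
  proof
    fix x show "(x,x)\<notin>F\<^sup>+"
    proof
      assume h: "(x,x)\<in>F\<^sup>+"
      then have "x \<in> V" using assms(1) by (auto dest: tranclD)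
      then obtain r where "isroot F r" "(r,x)\<in>F\<^sup>*" using assms(3) by blast
      with claim h show False by blast
    qed
  qed
qed

lemma DT:
  assumes "finite C" "T \<subseteq> C \<times> C" "r \<in> C" "indeg1 T" "isroot T r" "\<forall>v\<in>C. (r,v)\<in>T\<^sup>*"
  shows "diverging_tree_at C T r"
proof -
  have "bij_betw snd T (C - {r})"
    unfolding bij_betw_def
  proof
    show "inj_on snd T" using assms(4) unfolding inj_on_def indeg1_def by auto
    show "snd ` T = C - {r}"
    proof
      show "snd ` T \<subseteq> C - {r}" using assms(2,5) by (auto simp: isroot_def)
      show "C - {r} \<subseteq> snd ` T"
      proof
        fix v assume v: "v \<in> C - {r}"
        then have "(r,v)\<in>T\<^sup>*" using assms(6) by auto
        then obtain y where "(y,v)\<in>T" using v by (auto elim: rtranclE)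
        then show "v \<in> snd ` T" by force
      qed
    qed
  qed
  then have "card T = card (C - {r})" by (rule bij_betw_same_card)
  then have "card T = card C - 1" using assms(1,3) by simp
  then show ?thesis using assms unfolding diverging_tree_at_def by auto
qed

lemma DT':
  assumes "diverging_tree_at C T r"
  shows "indeg1 T \<and> isroot T r"
proof -
  have fC: "finite C" and TC: "T \<subseteq> C \<times> C" and rC: "r \<in> C" and reach: "\<forall>v\<in>C. (r,v)\<in>T\<^sup>*"
    and cT: "card T = card C - 1" using assms unfolding diverging_tree_at_def by auto
  define p where "p v = (SOME u. (u,v)\<in>T)" for v
  have pin: "(p v, v) \<in> T" if vC: "v \<in> C - {r}" for v
  proof -
    have "(r,v)\<in>T\<^sup>*" using reach vC by auto
    then obtain y where "(y,v)\<in>T" using vC by (auto elim: rtranclE)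
    then show ?thesis unfolding p_def by (rule someI)
  qed
  define P where "P = (\<lambda>v. (p v, v)) ` (C - {r})"
  have PT: "P \<subseteq> T" using pin unfolding P_def by auto
  have "card P = card (C - {r})" unfolding P_def
    by (rule card_image) (auto simp: inj_on_def)
  also have "\<dots> = card T" using cT fC rC by simp
  finally have "P = T" using PT finite_subset[OF TC] fC by (metis card_subset_eq finite_SigmaI)
  then have T: "T = (\<lambda>v. (p v, v)) ` (C - {r})" unfolding P_def by simp
  show ?thesis unfolding indeg1_def isroot_def by (subst T)+ auto
qed

lemma closed_path:
  assumes "(a,b)\<in>F\<^sup>*" "b \<in> C" "\<And>x y. (x,y)\<in>F \<Longrightarrow> y\<in>C \<Longrightarrow> x\<in>C"
  shows "a \<in> C \<and> (a,b)\<in>(F \<inter> C \<times> C)\<^sup>*"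
  using assms(1)
proof (induction a rule: converse_rtrancl_induct)
  case base then show ?case using assms(2) by simp
next
  case (step a a')
  then have "a \<in> C" using assms(3) by blast
  with step show ?case by (meson IntI converse_rtrancl_into_rtrancl mem_Sigma_iff)
qed



lemma root_exists:
  assumes "finite V" "forest V F"
  shows "\<exists>r. isroot F r \<and> (r,v)\<in>F\<^sup>*"
proof -
  have "finite F" using assms unfolding forest_def by (meson finite_SigmaI finite_subset)
  then have "wf F" using assms finite_acyclic_wf unfolding forest_def by blast
  then obtain z where z: "z \<in> {u. (u,v)\<in>F\<^sup>*}" "\<forall>y. (y,z)\<in>F \<longrightarrow> y \<notin> {u. (u,v)\<in>F\<^sup>*}"
    unfolding wf_eq_minimal by (metis mem_Collect_eq rtrancl.rtrancl_refl)
  have "isroot F z"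
    unfolding isroot_def
  proof (intro allI notI)
    fix u assume "(u,z)\<in>F"
    then have "(u,v)\<in>F\<^sup>*" using z(1) by (simp add: converse_rtrancl_into_rtrancl)
    then show False using z(2) \<open>(u,z)\<in>F\<close> by blast
  qed
  then show ?thesis using z(1) by blast
qed

lemma root_in_V:
  assumes "F \<subseteq> V \<times> V" "(r,v)\<in>F\<^sup>*" "v \<in> V"
  shows "r \<in> V"
  using assms(2) by (cases rule: converse_rtranclE) (use assms in auto)

lemma forest_tree:
  assumes fV: "finite V" and fo: "forest V F" and iV: "i \<in> V" and rj: "isroot F j" and ji: "(j,i)\<in>F\<^sup>*"
  shows "diverging_tree_at (wcomp V F i) (F \<inter> wcomp V F i \<times> wcomp V F i) j"
proof -
  define C where "C = wcomp V F i"
  have FV: "F \<subseteq> V \<times> V" and ind: "indeg1 F" using fo unfolding forest_def by auto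
  have closed: "x \<in> C" if "(x,y)\<in>F" "y\<in>C" for x y
  proof -
    have "x \<in> V" using that FV by auto
    moreover have "(i,y)\<in>(F\<union>F\<inverse>)\<^sup>*" using that unfolding C_def wcomp_def by auto
    then have "(i,x)\<in>(F\<union>F\<inverse>)\<^sup>*" using that by (meson UnI2 converse_iff rtrancl.rtrancl_into_rtrancl)
    ultimately show ?thesis unfolding C_def wcomp_def by auto
  qed
  have jV: "j \<in> V" using root_in_V[OF FV ji iV] .
  have "(i,j)\<in>(F\<inverse>)\<^sup>*" using ji by (simp add: rtrancl_converseI)
  then have "(i,j)\<in>(F\<union>F\<inverse>)\<^sup>*" by (meson rtrancl_mono sup_ge2 subsetD)
  then have jC: "j \<in> C" using jV unfolding C_def wcomp_def by auto
  have reachF: "(j,u)\<in>F\<^sup>*" if "(i,u)\<in>(F\<union>F\<inverse>)\<^sup>*" for u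
    using that
  proof (induction u rule: rtrancl_induct)
    case base then show ?case using ji .
  next
    case (step y z)
    show ?case
    proof (cases "(y,z)\<in>F")
      case True then show ?thesis using step by auto
    next
      case False
      then have zy: "(z,y)\<in>F" using step by auto
      obtain r where r: "isroot F r" "(r,z)\<in>F\<^sup>*" using root_exists[OF fV fo] by blast
      then have "(r,y)\<in>F\<^sup>*" using zy by auto
      then have "r = j" using roots_eq[OF ind r(1) rj _ step.IH] by simp
      then show ?thesis using r by simp
    qed
  qed
  show ?thesis unfolding C_def[symmetric]
  proof (rule DT)
    show "finite C" using fV unfolding C_def wcomp_def by auto
    show "F \<inter> C \<times> C \<subseteq> C \<times> C" by auto
    show "j \<in> C" by (rule jC)
    show "indeg1 (F \<inter> C \<times> C)" using ind unfolding indeg1_def by auto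
    show "isroot (F \<inter> C \<times> C) j" using rj unfolding isroot_def by auto
    show "\<forall>v\<in>C. (j, v) \<in> (F \<inter> C \<times> C)\<^sup>*"
    proof
      fix v assume "v \<in> C"
      moreover have "(j,v)\<in>F\<^sup>*" using reachF \<open>v\<in>C\<close> unfolding C_def wcomp_def by auto
      ultimately show "(j, v) \<in> (F \<inter> C \<times> C)\<^sup>*" using closed_path[of j v F C] closed by blast
    qed
  qed
qed

lemma wcomp_self: "i \<in> V \<Longrightarrow> i \<in> wcomp V F i"
  unfolding wcomp_def by auto

lemma wcomp_closed:
  assumes "F \<subseteq> V \<times> V" "(x,y)\<in>F" "y \<in> wcomp V F i"
  shows "x \<in> wcomp V F i"
proof -
  have "x \<in> V" using assms by auto
  moreover have "(i,y)\<in>(F\<union>F\<inverse>)\<^sup>*" using assms unfolding wcomp_def by auto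
  then have "(i,x)\<in>(F\<union>F\<inverse>)\<^sup>*" using assms by (meson UnI2 converse_iff rtrancl.rtrancl_into_rtrancl)
  ultimately show ?thesis unfolding wcomp_def by auto
qed

lemma of_iff:
  assumes fV: "finite V" and EV: "E \<subseteq> V \<times> V"
  shows "out_forest V E F \<longleftrightarrow> F \<subseteq> E \<and> forest V F"
proof
  assume of: "out_forest V E F"
  then have FE: "F \<subseteq> E" unfolding out_forest_def by auto
  then have FV: "F \<subseteq> V \<times> V" using EV by auto
  have dt: "\<exists>r. diverging_tree_at (wcomp V F v) (F \<inter> wcomp V F v \<times> wcomp V F v) r" if "v\<in>V" for v
    using of that unfolding out_forest_def diverging_tree_def by auto
  have ind: "indeg1 F" unfolding indeg1_def
  proof (intro allI impI)
    fix a b c assume ac: "(a,c)\<in>F" and bc: "(b,c)\<in>F"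
    then have cV: "c \<in> V" using FV by auto
    obtain r where r: "diverging_tree_at (wcomp V F c) (F \<inter> wcomp V F c \<times> wcomp V F c) r"
      using dt[OF cV] by blast
    have cC: "c \<in> wcomp V F c" using wcomp_self[OF cV] .
    have "a \<in> wcomp V F c" "b \<in> wcomp V F c" using wcomp_closed[OF FV] ac bc cC by auto
    then show "a = b" using DT'[OF r] ac bc cC unfolding indeg1_def by blast
  qed
  have "acyclic F"
  proof (rule acyc_crit[OF FV ind], intro ballI)
    fix v assume vV: "v \<in> V"
    obtain r where r: "diverging_tree_at (wcomp V F v) (F \<inter> wcomp V F v \<times> wcomp V F v) r"
      using dt[OF vV] by blast
    have rC: "r \<in> wcomp V F v" and rv: "(r,v)\<in>(F \<inter> wcomp V F v \<times> wcomp V F v)\<^sup>*"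
      using r wcomp_self[OF vV] unfolding diverging_tree_at_def by auto
    have "isroot F r" using DT'[OF r] wcomp_closed[OF FV _ rC] rC unfolding isroot_def by blast
    moreover have "(r,v)\<in>F\<^sup>*" using rv by (meson inf_le1 rtrancl_mono subsetD)
    ultimately show "\<exists>r. isroot F r \<and> (r,v)\<in>F\<^sup>*" by blast
  qed
  then show "F \<subseteq> E \<and> forest V F" using FE FV ind unfolding forest_def by auto
next
  assume h: "F \<subseteq> E \<and> forest V F"
  show "out_forest V E F" unfolding out_forest_def diverging_tree_def
  proof (intro conjI ballI)
    show "F \<subseteq> E" using h by auto
    fix v assume "v \<in> V"
    obtain r where "isroot F r" "(r,v)\<in>F\<^sup>*" using root_exists[OF fV] h by blast
    then show "\<exists>r. diverging_tree_at (wcomp V F v) (F \<inter> wcomp V F v \<times> wcomp V F v) r"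
      using forest_tree[OF fV _ \<open>v\<in>V\<close>] h by blast
  qed
qed

lemma itr_iff:
  assumes fV: "finite V" and fo: "forest V F" and iV: "i \<in> V"
  shows "in_tree_rooted V F i j \<longleftrightarrow> isroot F j \<and> (j,i)\<in>F\<^sup>*"
proof
  assume h: "in_tree_rooted V F i j"
  have FV: "F \<subseteq> V \<times> V" using fo unfolding forest_def by auto
  let ?C = "wcomp V F i"
  have d: "diverging_tree_at ?C (F \<inter> ?C \<times> ?C) j" using h unfolding in_tree_rooted_def .
  have jC: "j \<in> ?C" and ji: "(j,i)\<in>(F \<inter> ?C \<times> ?C)\<^sup>*"
    using d wcomp_self[OF iV] unfolding diverging_tree_at_def by auto
  have "isroot F j" using DT'[OF d] wcomp_closed[OF FV _ jC] jC unfolding isroot_def by blast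
  moreover have "(j,i)\<in>F\<^sup>*" using ji by (meson inf_le1 rtrancl_mono subsetD)
  ultimately show "isroot F j \<and> (j,i)\<in>F\<^sup>*" by blast
next
  assume "isroot F j \<and> (j,i)\<in>F\<^sup>*"
  then show "in_tree_rooted V F i j" unfolding in_tree_rooted_def using forest_tree[OF fV fo iV] by blast
qed

lemma card_forest:
  assumes fV: "finite V" and fo: "forest V F"
  shows "card F + card (roots V F) = card V"
proof -
  have FV: "F \<subseteq> V \<times> V" and ind: "indeg1 F" using fo unfolding forest_def by auto
  have "bij_betw snd F (V - roots V F)"
    unfolding bij_betw_def
  proof
    show "inj_on snd F" using ind unfolding inj_on_def indeg1_def by auto
    show "snd ` F = V - roots V F"
      using FV unfolding roots_def isroot_def by force
  qed
  then have "card F = card (V - roots V F)" by (rule bij_betw_same_card)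
  moreover have "roots V F \<subseteq> V" unfolding roots_def by auto
  ultimately show ?thesis using fV
    by (metis card_Diff_subset card_mono finite_subset le_add_diff_inverse2)
qed



lemma scomp_mem:
  assumes "x \<in> scomp V E v" shows "scomp V E x = scomp V E v"
  using assms unfolding scomp_def by (auto intro: rtrancl_trans)

lemma bb_sub: "basis_bicomp V E K \<Longrightarrow> K \<subseteq> V"
  unfolding basis_bicomp_def scomp_def by auto

lemma bb_ne: "basis_bicomp V E K \<Longrightarrow> K \<noteq> {}"
  unfolding basis_bicomp_def scomp_def by auto

lemma bb_conn: "basis_bicomp V E K \<Longrightarrow> x \<in> K \<Longrightarrow> y \<in> K \<Longrightarrow> (x,y)\<in>E\<^sup>*"
  unfolding basis_bicomp_def scomp_def by (auto intro: rtrancl_trans)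

lemma bb_closed: "basis_bicomp V E K \<Longrightarrow> (a,b)\<in>E \<Longrightarrow> b \<in> K \<Longrightarrow> a \<in> K"
  unfolding basis_bicomp_def by auto

lemma bb_closed_star: assumes "basis_bicomp V E K" "(a,b)\<in>E\<^sup>*" "b \<in> K" shows "a \<in> K"
  using closed_path[of a b E K] bb_closed[OF assms(1)] assms(2,3) by blast

lemma bb_disj:
  assumes "basis_bicomp V E K1" "basis_bicomp V E K2" "x \<in> K1" "x \<in> K2"
  shows "K1 = K2"
proof -
  obtain v1 where "K1 = scomp V E v1" using assms(1) unfolding basis_bicomp_def by auto
  moreover obtain v2 where "K2 = scomp V E v2" using assms(2) unfolding basis_bicomp_def by auto
  ultimately show ?thesis using scomp_mem assms(3,4) by metis
qed

lemma L3:
  assumes fV: "finite V" and EV: "E \<subseteq> V \<times> V" and vV: "v \<in> V"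
  shows "\<exists>K. basis_bicomp V E K \<and> (\<exists>k\<in>K. (k,v)\<in>E\<^sup>*)"
proof -
  define S where "S = {(x,u). (x,u)\<in>E\<^sup>* \<and> (u,x)\<notin>E\<^sup>*}"
  have SV: "S \<subseteq> V \<times> V"
  proof
    fix p assume "p \<in> S"
    then obtain x u where p: "p = (x,u)" "(x,u)\<in>E\<^sup>*" "x \<noteq> u" unfolding S_def by auto
    then have "(x,u)\<in>E\<^sup>+" by (meson rtranclD)
    then show "p \<in> V \<times> V" using p EV by (metis SigmaI subsetD trancl_domain trancl_range Domain.DomainI Range.RangeI SigmaD1 SigmaD2 tranclD tranclD2 rtranclD)
  qed
  have "trans S" unfolding S_def trans_def by (auto intro: rtrancl_trans)
  moreover have "irrefl S" unfolding S_def irrefl_def by auto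
  ultimately have "acyclic S" by (simp add: acyclic_irrefl)
  moreover have "finite S" using SV fV by (meson finite_SigmaI finite_subset)
  ultimately have "wf S" by (simp add: finite_acyclic_wf)
  then obtain z where z: "z \<in> {u. (u,v)\<in>E\<^sup>*}" "\<forall>y. (y,z)\<in>S \<longrightarrow> y \<notin> {u. (u,v)\<in>E\<^sup>*}"
    unfolding wf_eq_minimal by (metis mem_Collect_eq rtrancl.rtrancl_refl)
  have min: "(z,y)\<in>E\<^sup>*" if "(y,z)\<in>E\<^sup>*" for y
  proof (rule ccontr)
    assume "(z,y)\<notin>E\<^sup>*"
    then have "(y,z)\<in>S" using that unfolding S_def by auto
    moreover have "(y,v)\<in>E\<^sup>*" using that z(1) by (auto intro: rtrancl_trans)
    ultimately show False using z(2) by auto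
  qed
  have zV: "z \<in> V" using root_in_V[OF EV _ vV] z(1) by auto
  have "basis_bicomp V E (scomp V E z)" unfolding basis_bicomp_def
  proof (intro conjI ballI)
    show "\<exists>v\<in>V. scomp V E z = scomp V E v" using zV by auto
    fix p assume "p \<in> E"
    then obtain a b where p: "p = (a,b)" "(a,b)\<in>E" by (cases p) auto
    have "b \<in> scomp V E z \<longrightarrow> a \<in> scomp V E z"
    proof
      assume "b \<in> scomp V E z"
      then have "(b,z)\<in>E\<^sup>*" unfolding scomp_def by auto
      then have az: "(a,z)\<in>E\<^sup>*" using p by (meson converse_rtrancl_into_rtrancl)
      then have "(z,a)\<in>E\<^sup>*" by (rule min)
      moreover have "a \<in> V" using p EV by auto
      ultimately show "a \<in> scomp V E z" using az unfolding scomp_def by auto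
    qed
    then show "case p of (a, b) \<Rightarrow> b \<in> scomp V E z \<longrightarrow> a \<in> scomp V E z" using p by simp
  qed
  moreover have "z \<in> scomp V E z" using zV unfolding scomp_def by auto
  ultimately show ?thesis using z(1) by blast
qed

lemma L1:
  assumes fV: "finite V" and fo: "forest V F" and KV: "K \<subseteq> V" and Kne: "K \<noteq> {}"
    and cl: "\<And>a b. (a,b)\<in>F \<Longrightarrow> b\<in>K \<Longrightarrow> a\<in>K"
  shows "\<exists>r\<in>K. isroot F r"
proof -
  obtain k where "k \<in> K" using Kne by auto
  obtain r where r: "isroot F r" "(r,k)\<in>F\<^sup>*" using root_exists[OF fV fo] by blast
  then have "r \<in> K" using closed_path[of r k F K] cl \<open>k\<in>K\<close> by blast
  then show ?thesis using r by blast
qed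

lemma family_count:
  assumes fB: "finite B" and fS: "finite S"
    and disj: "\<And>K1 K2 x. K1 \<in> B \<Longrightarrow> K2 \<in> B \<Longrightarrow> x \<in> K1 \<Longrightarrow> x \<in> K2 \<Longrightarrow> K1 = K2"
    and meet: "\<And>K. K \<in> B \<Longrightarrow> K \<inter> S \<noteq> {}"
  shows "card B \<le> card S"
    and "card B = card S \<Longrightarrow> x \<in> S \<Longrightarrow> \<exists>K\<in>B. x \<in> K"
    and "card B = card S \<Longrightarrow> K \<in> B \<Longrightarrow> x \<in> K \<inter> S \<Longrightarrow> y \<in> K \<inter> S \<Longrightarrow> x = y"
proof -
  define c where "c K = (SOME x. x \<in> K \<inter> S)" for K
  have cK: "c K \<in> K \<inter> S" if "K \<in> B" for K
    unfolding c_def using meet[OF that] by (meson ex_in_conv someI_ex)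
  have inj: "inj_on c B" unfolding inj_on_def using cK disj by (metis IntE)
  have sub: "c ` B \<subseteq> S" using cK by auto
  have cardB: "card B = card (c ` B)" using card_image[OF inj] by simp
  show "card B \<le> card S" using cardB card_mono[OF fS sub] by simp
  {
    assume eq: "card B = card S"
    then have img: "c ` B = S" using cardB sub fS by (metis card_subset_eq)
    show "x \<in> S \<Longrightarrow> \<exists>K\<in>B. x \<in> K" using img cK by force
    show "K \<in> B \<Longrightarrow> x \<in> K \<inter> S \<Longrightarrow> y \<in> K \<inter> S \<Longrightarrow> x = y"
    proof -
      assume KB: "K \<in> B" and x: "x \<in> K \<inter> S" and y: "y \<in> K \<inter> S"
      obtain K1 where K1: "K1 \<in> B" "x = c K1" using img x by auto
      obtain K2 where K2: "K2 \<in> B" "y = c K2" using img y by auto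
      have "K1 = K" using disj[OF K1(1) KB] cK[OF K1(1)] K1(2) x by auto
      moreover have "K2 = K" using disj[OF K2(1) KB] cK[OF K2(1)] K2(2) y by auto
      ultimately show "x = y" using K1 K2 by simp
    qed
  }
qed

lemma max_char:
  assumes fV: "finite V" and EV: "E \<subseteq> V \<times> V"
    and lb: "\<And>F. F \<subseteq> E \<Longrightarrow> forest V F \<Longrightarrow> m \<le> card (roots V F)"
    and F0: "F0 \<subseteq> E" "forest V F0" "card (roots V F0) = m"
  shows "max_out_forests V E = {F. F \<subseteq> E \<and> forest V F \<and> card (roots V F) = m}"
proof -
  have c0: "card F0 + m = card V" using card_forest[OF fV F0(2)] F0(3) by simp
  show ?thesis unfolding max_out_forests_def of_iff[OF fV EV]
  proof (intro set_eqI iffI; clarsimp)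
    fix F assume FE: "F \<subseteq> E" and fo: "forest V F" and mx: "\<forall>F'. F' \<subseteq> E \<and> forest V F' \<longrightarrow> card F' \<le> card F"
    have "card F0 \<le> card F" using mx F0 by auto
    moreover have "card F + card (roots V F) = card V" using card_forest[OF fV fo] .
    moreover have "m \<le> card (roots V F)" using lb[OF FE fo] .
    ultimately show "card (roots V F) = m" using c0 by linarith
  next
    fix F F' assume FE: "F \<subseteq> E" and fo: "forest V F" and m: "m = card (roots V F)"
      and F'E: "F' \<subseteq> E" and fo': "forest V F'"
    have "card F + card (roots V F) = card V" using card_forest[OF fV fo] .
    moreover have "card F' + card (roots V F') = card V" using card_forest[OF fV fo'] .
    moreover have "m \<le> card (roots V F')" using lb[OF F'E fo'] .
    ultimately show "card F' \<le> card F" using m by linarith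
  qed
qed



lemma exit_arc:
  assumes "(r,x)\<in>E\<^sup>*" "r \<in> S" "x \<notin> S"
  shows "\<exists>a b. (a,b)\<in>E \<and> a\<in>S \<and> b\<notin>S"
  using assms by (induction x rule: rtrancl_induct) auto

lemma growth:
  assumes fV: "finite V" and EV: "E \<subseteq> V \<times> V" and RV: "R \<subseteq> V"
    and F0E: "F0 \<subseteq> E" and fo0: "forest V F0" and R0: "\<forall>r\<in>R. isroot F0 r"
    and inv0: "\<forall>v\<in>V. isroot F0 v \<or> (\<exists>r\<in>R. (r,v)\<in>F0\<^sup>*)"
  shows "\<exists>F. F \<subseteq> E \<and> forest V F \<and> F0 \<subseteq> F \<and> (\<forall>r\<in>R. isroot F r) \<and>
           (\<forall>v\<in>V. (\<exists>r\<in>R. (r,v)\<in>E\<^sup>*) \<longrightarrow> (\<exists>r\<in>R. (r,v)\<in>F\<^sup>*)) \<and>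
           (\<forall>v\<in>V. isroot F v \<or> (\<exists>r\<in>R. (r,v)\<in>F\<^sup>*))"
proof -
  define P where "P F \<longleftrightarrow> F \<subseteq> E \<and> forest V F \<and> F0 \<subseteq> F \<and> (\<forall>r\<in>R. isroot F r) \<and>
     (\<forall>v\<in>V. isroot F v \<or> (\<exists>r\<in>R. (r,v)\<in>F\<^sup>*))" for F
  have fE: "finite E" using EV fV by (meson finite_SigmaI finite_subset)
  have "P F0" unfolding P_def using assms by auto
  moreover have "\<forall>F. P F \<longrightarrow> card F < Suc (card E)"
    unfolding P_def using fE by (metis card_mono le_imp_less_Suc)
  ultimately obtain F where PF: "P F" and mx: "\<forall>F'. P F' \<longrightarrow> card F' \<le> card F"
    using ex_has_greatest_nat[of P F0 card "Suc (card E)"] by blast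
  have FE: "F \<subseteq> E" and fo: "forest V F" and F0F: "F0 \<subseteq> F" and Rr: "\<forall>r\<in>R. isroot F r"
    and inv: "\<forall>v\<in>V. isroot F v \<or> (\<exists>r\<in>R. (r,v)\<in>F\<^sup>*)" using PF unfolding P_def by auto
  have ind: "indeg1 F" and FV: "F \<subseteq> V \<times> V" and ac: "acyclic F" using fo unfolding forest_def by auto
  have "\<exists>r\<in>R. (r,v)\<in>F\<^sup>*" if vV: "v \<in> V" and rv: "\<exists>r\<in>R. (r,v)\<in>E\<^sup>*" for v
  proof (rule ccontr)
    assume nv: "\<not> (\<exists>r\<in>R. (r,v)\<in>F\<^sup>*)"
    define S where "S = {x. \<exists>r\<in>R. (r,x)\<in>F\<^sup>*}"
    obtain r where "r \<in> R" "(r,v)\<in>E\<^sup>*" using rv by blast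
    moreover have "r \<in> S" using \<open>r\<in>R\<close> unfolding S_def by auto
    moreover have "v \<notin> S" using nv unfolding S_def by auto
    ultimately obtain a b where ab: "(a,b)\<in>E" "a \<in> S" "b \<notin> S" using exit_arc by metis
    have bV: "b \<in> V" using ab EV by auto
    have bR: "b \<notin> R" using ab(3) unfolding S_def by auto
    have rb: "isroot F b" using inv bV ab(3) unfolding S_def by auto
    obtain r1 where r1: "r1 \<in> R" "(r1,a)\<in>F\<^sup>*" using ab(2) unfolding S_def by auto
    have nba: "(b,a)\<notin>F\<^sup>*"
    proof
      assume ba: "(b,a)\<in>F\<^sup>*"
      have "r1 = b" using roots_eq[OF ind _ rb r1(2) ba] Rr r1(1) by blast
      then show False using r1(1) bR by simp
    qed
    define F' where "F' = insert (a,b) F"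
    have abF: "(a,b) \<notin> F" using rb unfolding isroot_def by auto
    have "P F'" unfolding P_def
    proof (intro conjI ballI)
      show "F' \<subseteq> E" using FE ab unfolding F'_def by auto
      show "forest V F'" unfolding forest_def F'_def
      proof (intro conjI)
        show "insert (a,b) F \<subseteq> V \<times> V" using FV ab EV by auto
        show "indeg1 (insert (a,b) F)" using ind rb unfolding indeg1_def isroot_def by blast
        show "acyclic (insert (a,b) F)" using ac nba by simp
      qed
      show "F0 \<subseteq> F'" using F0F unfolding F'_def by auto
      fix r assume "r \<in> R" then show "isroot F' r" using Rr bR unfolding isroot_def F'_def by auto
    next
      fix x assume xV: "x \<in> V"
      have mono: "F\<^sup>* \<subseteq> F'\<^sup>*" unfolding F'_def by (meson rtrancl_mono subset_insertI)
      show "isroot F' x \<or> (\<exists>r\<in>R. (r,x)\<in>F'\<^sup>*)"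
      proof (cases "\<exists>r\<in>R. (r,x)\<in>F\<^sup>*")
        case True then show ?thesis using mono by blast
      next
        case False
        then have "isroot F x" using inv xV by blast
        show ?thesis
        proof (cases "x = b")
          case True
          have "(r1,b)\<in>F'\<^sup>*" using r1(2) mono unfolding F'_def
            by (meson insertI1 rtrancl.rtrancl_into_rtrancl subsetD)
          then show ?thesis using True r1(1) by blast
        next
          case False
          then show ?thesis using \<open>isroot F x\<close> unfolding isroot_def F'_def by auto
        qed
      qed
    qed
    then have "card F' \<le> card F" using mx by blast
    moreover have "card F' = Suc (card F)" unfolding F'_def using abF FE fE
      by (meson card_insert_disjoint finite_subset)
    ultimately show False by simp
  qed
  then show ?thesis using FE fo F0F Rr inv by blast
qed



lemma forest_empty: "forest V {}"
  unfolding forest_def indeg1_def by (auto simp: acyclic_def)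

lemma forest_subset: "forest V F \<Longrightarrow> G \<subseteq> F \<Longrightarrow> forest V G"
  unfolding forest_def indeg1_def by (meson acyclic_subset subset_trans subsetD)

context
  fixes V :: "'a set" and E :: "('a \<times> 'a) set"
  assumes fV: "finite V" and EV: "E \<subseteq> V \<times> V"
begin

definition "BB = {K. basis_bicomp V E K}"
definition "rep K = (SOME x. x \<in> K)" for K :: "'a set"

lemma fE: "finite E" using EV fV by (meson finite_SigmaI finite_subset)

lemma fBB: "finite BB"
proof -
  have "BB \<subseteq> Pow V" unfolding BB_def using bb_sub by blast
  then show ?thesis using finite_subset fV by (simp add: finite_subset)
qed

lemma rep_in: assumes "K \<in> BB" shows "rep K \<in> K"
proof -
  have "K \<noteq> {}" using assms bb_ne unfolding BB_def by blast
  then obtain x where "x \<in> K" by blast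
  then show ?thesis unfolding rep_def by (rule someI)
qed

lemma BB_disj: "K1 \<in> BB \<Longrightarrow> K2 \<in> BB \<Longrightarrow> x \<in> K1 \<Longrightarrow> x \<in> K2 \<Longrightarrow> K1 = K2"
  unfolding BB_def using bb_disj[of V E K1 K2 x] by simp

lemma rep_inj: "inj_on rep BB"
proof (rule inj_onI)
  fix K1 K2 assume "K1 \<in> BB" "K2 \<in> BB" "rep K1 = rep K2"
  then show "K1 = K2" using rep_in[of K1] rep_in[of K2] BB_disj[of K1 K2 "rep K1"] by simp
qed

lemma lbE:
  assumes "F \<subseteq> E" "forest V F"
  shows "card BB \<le> card (roots V F)"
proof (rule family_count(1)[OF fBB])
  show "finite (roots V F)" using fV unfolding roots_def by auto
  show "\<And>K1 K2 x. K1 \<in> BB \<Longrightarrow> K2 \<in> BB \<Longrightarrow> x \<in> K1 \<Longrightarrow> x \<in> K2 \<Longrightarrow> K1 = K2" by (rule BB_disj)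
  fix K assume KB: "K \<in> BB"
  then have bb: "basis_bicomp V E K" unfolding BB_def by auto
  obtain r where "r \<in> K" "isroot F r"
    using L1[OF fV assms(2) bb_sub[OF bb] bb_ne[OF bb]] bb_closed[OF bb] assms(1) by blast
  moreover have "r \<in> V" using \<open>r\<in>K\<close> bb_sub[OF bb] by auto
  ultimately show "K \<inter> roots V F \<noteq> {}" unfolding roots_def by auto
qed

lemma reach_from_rep:
  assumes "v \<in> V"
  shows "\<exists>K\<in>BB. (rep K, v)\<in>E\<^sup>*"
proof -
  obtain K k where K: "basis_bicomp V E K" "k \<in> K" "(k,v)\<in>E\<^sup>*" using L3[OF fV EV assms] by blast
  then have "K \<in> BB" unfolding BB_def by auto
  moreover have "(rep K, k)\<in>E\<^sup>*" using bb_conn[OF K(1) rep_in[OF \<open>K\<in>BB\<close>] K(2)] .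
  ultimately show ?thesis using K(3) rtrancl_trans[of "rep K" k E v] by blast
qed

lemma BB_V: "K \<in> BB \<Longrightarrow> K \<subseteq> V"
  unfolding BB_def using bb_sub[of V E K] by simp

lemma rep_V: "rep ` BB \<subseteq> V"
  using rep_in BB_V by blast

lemma ex_d: "\<exists>F. F \<subseteq> E \<and> forest V F \<and> card (roots V F) = card BB"
proof -
  have RV: "rep ` BB \<subseteq> V" by (rule rep_V)
  have R0: "\<forall>r\<in>rep ` BB. isroot {} r" by (simp add: isroot_def)
  have I0: "\<forall>v\<in>V. isroot {} v \<or> (\<exists>r\<in>rep ` BB. (r,v)\<in>{}\<^sup>*)" by (simp add: isroot_def)
  obtain F where F: "F \<subseteq> E" "forest V F" "{} \<subseteq> F" "\<forall>r\<in>rep ` BB. isroot F r" "\<forall>v\<in>V. (\<exists>r\<in>rep ` BB. (r,v)\<in>E\<^sup>*) \<longrightarrow> (\<exists>r\<in>rep ` BB. (r,v)\<in>F\<^sup>*)"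
     "\<forall>v\<in>V. isroot F v \<or> (\<exists>r\<in>rep ` BB. (r,v)\<in>F\<^sup>*)"
    using growth[OF fV EV RV empty_subsetI forest_empty R0 I0] by (elim exE conjE) (rule that; assumption)
  have "roots V F \<subseteq> rep ` BB"
  proof
    fix v assume "v \<in> roots V F"
    then have vV: "v \<in> V" and rv: "isroot F v" unfolding roots_def by auto
    obtain K where "K \<in> BB" "(rep K, v)\<in>E\<^sup>*" using reach_from_rep[OF vV] by blast
    then have "\<exists>r\<in>rep ` BB. (r,v)\<in>E\<^sup>*" by blast
    then obtain r where "r \<in> rep ` BB" "(r,v)\<in>F\<^sup>*" using F(5) vV by blast
    moreover have "r = v" using root_reach[OF rv \<open>(r,v)\<in>F\<^sup>*\<close>] .
    ultimately show "v \<in> rep ` BB" by simp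
  qed
  then have "card (roots V F) \<le> card (rep ` BB)"
    using fBB by (intro card_mono) auto
  also have "\<dots> = card BB" using card_image[OF rep_inj] .
  finally have "card (roots V F) \<le> card BB" .
  moreover have "card BB \<le> card (roots V F)" using lbE[OF F(1,2)] .
  ultimately have "card (roots V F) = card BB" by simp
  then show ?thesis using F(1,2) by blast
qed

definition "MM = {F. F \<subseteq> E \<and> forest V F \<and> card (roots V F) = card BB}"

lemma MM_eq: "max_out_forests V E = MM"
proof -
  obtain F0 where "F0 \<subseteq> E" "forest V F0" "card (roots V F0) = card BB" using ex_d by blast
  then show ?thesis unfolding MM_def using max_char[OF fV EV lbE] by blast
qed

lemma MM_roots:
  assumes "F \<in> MM"
  shows "x \<in> roots V F \<Longrightarrow> \<exists>K\<in>BB. x \<in> K"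
    and "K \<in> BB \<Longrightarrow> x \<in> K \<inter> roots V F \<Longrightarrow> y \<in> K \<inter> roots V F \<Longrightarrow> x = y"
    and "K \<in> BB \<Longrightarrow> \<exists>r\<in>K. isroot F r"
proof -
  have FE: "F \<subseteq> E" and fo: "forest V F" and c: "card (roots V F) = card BB"
    using assms unfolding MM_def by auto
  have fr: "finite (roots V F)" using fV unfolding roots_def by auto
  have meet: "K \<inter> roots V F \<noteq> {}" if "K \<in> BB" for K
  proof -
    have bb: "basis_bicomp V E K" using that unfolding BB_def by auto
    obtain r where "r \<in> K" "isroot F r"
      using L1[OF fV fo bb_sub[OF bb] bb_ne[OF bb]] bb_closed[OF bb] FE by blast
    moreover have "r \<in> V" using \<open>r\<in>K\<close> bb_sub[OF bb] by auto
    ultimately show ?thesis unfolding roots_def by auto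
  qed
  show "x \<in> roots V F \<Longrightarrow> \<exists>K\<in>BB. x \<in> K"
    by (rule family_count(2)[OF fBB fr BB_disj meet c[symmetric]])
  show "K \<in> BB \<Longrightarrow> x \<in> K \<inter> roots V F \<Longrightarrow> y \<in> K \<inter> roots V F \<Longrightarrow> x = y"
    by (rule family_count(3)[OF fBB fr BB_disj meet c[symmetric]])
  show "K \<in> BB \<Longrightarrow> \<exists>r\<in>K. isroot F r" using meet unfolding roots_def by auto
qed

lemma ex_tree:
  assumes KB: "K \<in> BB" and jK: "j \<in> K" and iV: "i \<in> V" and ji: "(j,i)\<in>E\<^sup>*"
  shows "\<exists>F\<in>MM. isroot F j \<and> (j,i)\<in>F\<^sup>*"
proof -
  have bbK: "basis_bicomp V E K" using KB unfolding BB_def by auto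
  have jV: "j \<in> V" using jK bb_sub[OF bbK] by auto
  have jVs: "{j} \<subseteq> V" using jV by simp
  have R0: "\<forall>r\<in>{j}. isroot {} r" by (simp add: isroot_def)
  have I0: "\<forall>v\<in>V. isroot {} v \<or> (\<exists>r\<in>{j}. (r,v)\<in>{}\<^sup>*)" by (simp add: isroot_def)
  obtain F1 where G1: "F1 \<subseteq> E" "forest V F1" "{} \<subseteq> F1" "\<forall>r\<in>{j}. isroot F1 r"
     "\<forall>v\<in>V. (\<exists>r\<in>{j}. (r,v)\<in>E\<^sup>*) \<longrightarrow> (\<exists>r\<in>{j}. (r,v)\<in>F1\<^sup>*)"
     "\<forall>v\<in>V. isroot F1 v \<or> (\<exists>r\<in>{j}. (r,v)\<in>F1\<^sup>*)"
    using growth[OF fV EV jVs empty_subsetI forest_empty R0 I0] by (elim exE conjE) (rule that; assumption)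
  have F1: "F1 \<subseteq> E" "forest V F1" "isroot F1 j"
    "\<forall>v\<in>V. (j,v)\<in>E\<^sup>* \<longrightarrow> (j,v)\<in>F1\<^sup>*" "\<forall>v\<in>V. isroot F1 v \<or> (j,v)\<in>F1\<^sup>*"
    using G1 by simp_all
  define R where "R = insert j (rep ` (BB - {K}))"
  have RV: "R \<subseteq> V" unfolding R_def using rep_in jV unfolding BB_def using bb_sub by blast
  have Rroot: "\<forall>r\<in>R. isroot F1 r"
  proof
    fix r assume "r \<in> R"
    then consider "r = j" | K' where "K' \<in> BB - {K}" "r = rep K'" unfolding R_def by auto
    then show "isroot F1 r"
    proof cases
      case 1 then show ?thesis using F1 by simp
    next
      case 2
      have bb': "basis_bicomp V E K'" using 2 unfolding BB_def by auto
      have rK': "r \<in> K'" using rep_in 2 by auto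
      show ?thesis
      proof (rule ccontr)
        assume "\<not> isroot F1 r"
        then have "(j,r)\<in>F1\<^sup>*" using F1(5) rK' bb_sub[OF bb'] by auto
        then have "(j,r)\<in>E\<^sup>*" using F1(1) by (meson rtrancl_mono subsetD)
        then have "j \<in> K'" using bb_closed_star[OF bb' _ rK'] by blast
        then have "K' = K" using BB_disj[OF _ KB _ jK] 2 by auto
        then show False using 2 by auto
      qed
    qed
  qed
  have inv1: "\<forall>v\<in>V. isroot F1 v \<or> (\<exists>r\<in>R. (r,v)\<in>F1\<^sup>*)" using F1(5) unfolding R_def by auto
  obtain F2 where F2: "F2 \<subseteq> E" "forest V F2" "F1 \<subseteq> F2" "\<forall>r\<in>R. isroot F2 r"
    "\<forall>v\<in>V. (\<exists>r\<in>R. (r,v)\<in>E\<^sup>*) \<longrightarrow> (\<exists>r\<in>R. (r,v)\<in>F2\<^sup>*)"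
    "\<forall>v\<in>V. isroot F2 v \<or> (\<exists>r\<in>R. (r,v)\<in>F2\<^sup>*)"
    using growth[OF fV EV RV F1(1,2) Rroot inv1] by (elim exE conjE) (rule that; assumption)
  have "roots V F2 \<subseteq> R"
  proof
    fix v assume "v \<in> roots V F2"
    then have vV: "v \<in> V" and rv: "isroot F2 v" unfolding roots_def by auto
    obtain K' where K': "K' \<in> BB" "(rep K', v)\<in>E\<^sup>*" using reach_from_rep[OF vV] by blast
    have "\<exists>r\<in>R. (r,v)\<in>E\<^sup>*"
    proof (cases "K' = K")
      case True
      have "(j, rep K)\<in>E\<^sup>*" using bb_conn[OF bbK jK rep_in[OF KB]] .
      then show ?thesis using K' True unfolding R_def by (meson insertI1 rtrancl_trans)
    next
      case False then show ?thesis using K' unfolding R_def by blast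
    qed
    then obtain r where "r \<in> R" "(r,v)\<in>F2\<^sup>*" using F2(5) vV by blast
    then show "v \<in> R" using root_reach[OF rv] by blast
  qed
  moreover have "card R \<le> card BB"
  proof -
    have "card R \<le> Suc (card (rep ` (BB - {K})))" unfolding R_def by (simp add: card_insert_le_m1)
    also have "card (rep ` (BB - {K})) = card (BB - {K})"
      using rep_inj by (meson card_image inj_on_diff)
    also have "\<dots> = card BB - 1" using KB fBB by simp
    finally show ?thesis using KB fBB by (metis Suc_diff_1 card_gt_0_iff empty_iff)
  qed
  moreover have "finite R" unfolding R_def using fBB by auto
  ultimately have "card (roots V F2) \<le> card BB" by (meson card_mono le_trans)
  then have "F2 \<in> MM" using lbE[OF F2(1,2)] F2 unfolding MM_def by auto
  moreover have "isroot F2 j" using F2(4) unfolding R_def by auto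
  moreover have "(j,i)\<in>F2\<^sup>*" using F1(4) iV ji F2(3) by (meson rtrancl_mono subsetD)
  ultimately show ?thesis by blast
qed

lemma BBI: "basis_bicomp V E K \<Longrightarrow> K \<in> BB"
  unfolding BB_def by simp

lemma KT_eq: "K_tilde V E = \<Union>BB"
  unfolding BB_def K_tilde_def by simp

lemma BBbb: "K \<in> BB \<Longrightarrow> basis_bicomp V E K"
  unfolding BB_def by simp

lemma Kroots:
  assumes KB: "K \<in> BB" and GE: "G \<subseteq> E - E \<inter> (K \<times> K)" and kK: "k \<in> K"
  shows "isroot G k"
  unfolding isroot_def
proof (intro allI notI)
  fix u assume uk: "(u,k)\<in>G"
  then have "(u,k)\<in>E" using GE by auto
  then have "u \<in> K" using bb_closed[OF BBbb[OF KB]] kK by blast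
  then show False using uk GE kK by auto
qed

lemma KV: "K \<in> BB \<Longrightarrow> K \<subseteq> V"
  by (rule BB_V)

lemma fK: "K \<in> BB \<Longrightarrow> finite K"
  using KV fV by (meson finite_subset)

lemma BB_pos: "K \<in> BB \<Longrightarrow> card (BB) \<ge> 1"
  using fBB by (metis One_nat_def Suc_leI card_gt_0_iff empty_iff)

lemma lbE':
  assumes KB: "K \<in> BB" and GE: "G \<subseteq> E - E \<inter> (K \<times> K)" and fo: "forest V G"
  shows "card (BB) - 1 + card K \<le> card (roots V G)"
proof -
  define S where "S = roots V G - K"
  have fS: "finite S" using fV unfolding S_def roots_def by auto
  have KR: "K \<subseteq> roots V G" using Kroots[OF KB GE] KV[OF KB] unfolding roots_def by auto
  have "card (BB - {K}) \<le> card S"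
  proof (rule family_count(1))
    show "finite (BB - {K})" using fBB by simp
    show "finite S" by (rule fS)
    show "K1 = K2" if "K1 \<in> BB - {K}" "K2 \<in> BB - {K}" "x \<in> K1" "x \<in> K2" for K1 K2 x
      using BB_disj[of K1 K2 x] that by simp
    fix K' assume K': "K' \<in> BB - {K}"
    have bb: "basis_bicomp V E K'" using K' BBbb[of K'] by simp
    have cl: "\<And>a b. (a,b)\<in>G \<Longrightarrow> b\<in>K' \<Longrightarrow> a\<in>K'" using bb_closed[OF bb] GE by blast
    have "\<exists>r\<in>K'. isroot G r" by (rule L1[OF fV fo bb_sub[OF bb] bb_ne[OF bb] cl])
    then obtain r where r: "r \<in> K'" "isroot G r" by blast
    have "r \<notin> K"
    proof
      assume "r \<in> K"
      then have "K' = K" using BB_disj[of K' K r] K' KB r(1) by simp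
      then show False using K' by simp
    qed
    moreover have "r \<in> V" using r(1) bb_sub[OF bb] by auto
    ultimately show "K' \<inter> S \<noteq> {}" using r unfolding S_def roots_def by auto
  qed
  moreover have "card (BB - {K}) = card (BB) - 1" using KB fBB by simp
  moreover have "card (roots V G) = card S + card K"
  proof -
    have "roots V G = S \<union> K" using KR unfolding S_def by auto
    moreover have "S \<inter> K = {}" unfolding S_def by auto
    ultimately show ?thesis using fS fK[OF KB] by (simp add: card_Un_disjoint)
  qed
  ultimately show ?thesis by simp
qed

lemma roots_minusK:
  assumes KB: "K \<in> BB" and FM: "F \<in> MM" and jK: "j \<in> K" and rj: "isroot F j"
  shows "card (roots V (F - K \<times> K)) = card (BB) - 1 + card K"
proof -
  have FE: "F \<subseteq> E" and cF: "card (roots V F) = card (BB)" using FM unfolding MM_def by auto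
  have jV: "j \<in> V" using jK KV[OF KB] by auto
  have GE: "F - K \<times> K \<subseteq> E - E \<inter> (K \<times> K)" using FE by auto
  have RK: "roots V F \<inter> K = {j}"
  proof
    show "{j} \<subseteq> roots V F \<inter> K" using jK jV rj unfolding roots_def by auto
    show "roots V F \<inter> K \<subseteq> {j}"
    proof
      fix x assume x: "x \<in> roots V F \<inter> K"
      have "j \<in> K \<inter> roots V F" using jK jV rj unfolding roots_def by auto
      then show "x \<in> {j}" using MM_roots(2)[OF FM KB, of x j] x by auto
    qed
  qed
  have eq: "roots V (F - K \<times> K) = (roots V F - K) \<union> K"
  proof
    show "roots V (F - K \<times> K) \<subseteq> roots V F - K \<union> K"
      unfolding roots_def isroot_def by auto
    show "roots V F - K \<union> K \<subseteq> roots V (F - K \<times> K)"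
      using Kroots[OF KB GE] KV[OF KB] unfolding roots_def isroot_def by auto
  qed
  have fR: "finite (roots V F)" using fV unfolding roots_def by auto
  have "card (roots V F - K) = card (roots V F) - card (roots V F \<inter> K)"
    using fR by (metis card_Diff_subset_Int finite_Int)
  then have c1: "card (roots V F - K) = card (BB) - 1" using RK cF by simp
  have "card ((roots V F - K) \<union> K) = card (roots V F - K) + card K"
    by (rule card_Un_disjoint) (use fR fK[OF KB] in auto)
  then show ?thesis using eq c1 by simp
qed

lemma ex_d':
  assumes KB: "K \<in> BB"
  shows "\<exists>G. G \<subseteq> E - E \<inter> (K \<times> K) \<and> forest V G \<and> card (roots V G) = card (BB) - 1 + card K"
proof -
  obtain F where F: "F \<subseteq> E" "forest V F" "card (roots V F) = card (BB)" using ex_d by blast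
  then have FM: "F \<in> MM" unfolding MM_def by simp
  obtain j where j: "j \<in> K" "isroot F j" using MM_roots(3)[OF FM KB] by blast
  have "F - K \<times> K \<subseteq> E - E \<inter> (K \<times> K)" using F by auto
  moreover have "forest V (F - K \<times> K)" using forest_subset F(2) by blast
  ultimately show ?thesis using roots_minusK[OF KB FM j] by blast
qed

definition "MM' K = {G. G \<subseteq> E - E \<inter> (K \<times> K) \<and> forest V G \<and> card (roots V G) = card (BB) - 1 + card K}"

lemma EV': "E - E \<inter> (K \<times> K) \<subseteq> V \<times> V" using EV by auto

lemma MM'_eq:
  assumes KB: "K \<in> BB"
  shows "max_out_forests V (E - E \<inter> (K \<times> K)) = MM' K"
proof -
  obtain G0 where "G0 \<subseteq> E - E \<inter> (K \<times> K)" "forest V G0" "card (roots V G0) = card (BB) - 1 + card K"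
    using ex_d'[OF KB] by blast
  then show ?thesis unfolding MM'_def using max_char[OF fV EV' lbE'[OF KB]] by blast
qed

lemma MM'_roots:
  assumes KB: "K \<in> BB" and GM: "G \<in> MM' K" and xr: "x \<in> roots V G" and xK: "x \<notin> K"
  shows "\<exists>K'\<in>BB. K' \<noteq> K \<and> x \<in> K'"
proof -
  have GE: "G \<subseteq> E - E \<inter> (K \<times> K)" and fo: "forest V G"
    and c: "card (roots V G) = card (BB) - 1 + card K" using GM unfolding MM'_def by auto
  define S where "S = roots V G - K"
  have fS: "finite S" using fV unfolding S_def roots_def by auto
  have KR: "K \<subseteq> roots V G" using Kroots[OF KB GE] KV[OF KB] unfolding roots_def by auto
  have cS: "card (roots V G) = card S + card K"
  proof -
    have "roots V G = S \<union> K" using KR unfolding S_def by auto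
    moreover have "S \<inter> K = {}" unfolding S_def by auto
    ultimately show ?thesis using fS fK[OF KB] by (simp add: card_Un_disjoint)
  qed
  have cB: "card (BB - {K}) = card S"
    using c cS KB fBB by simp
  have meet: "K' \<inter> S \<noteq> {}" if K': "K' \<in> BB - {K}" for K'
  proof -
    have bb: "basis_bicomp V E K'" using K' BBbb[of K'] by simp
    have cl: "\<And>a b. (a,b)\<in>G \<Longrightarrow> b\<in>K' \<Longrightarrow> a\<in>K'" using bb_closed[OF bb] GE by blast
    have "\<exists>r\<in>K'. isroot G r" by (rule L1[OF fV fo bb_sub[OF bb] bb_ne[OF bb] cl])
    then obtain r where r: "r \<in> K'" "isroot G r" by blast
    have "r \<notin> K"
    proof
      assume "r \<in> K"
      then have "K' = K" using BB_disj[of K' K r] K' KB r(1) by simp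
      then show False using K' by simp
    qed
    moreover have "r \<in> V" using r(1) bb_sub[OF bb] by auto
    ultimately show "K' \<inter> S \<noteq> {}" using r unfolding S_def roots_def by auto
  qed
  have disj: "K1 = K2" if "K1 \<in> BB - {K}" "K2 \<in> BB - {K}" "y \<in> K1" "y \<in> K2" for K1 K2 y
    using BB_disj[of K1 K2 y] that by simp
  have xS: "x \<in> S" using xr xK unfolding S_def by simp
  have fB': "finite (BB - {K})" using fBB by simp
  have "\<exists>K'\<in>BB - {K}. x \<in> K'" by (rule family_count(2)[OF fB' fS disj meet cB xS])
  then obtain K' where "K' \<in> BB - {K}" "x \<in> K'" by blast
  then show ?thesis by auto
qed


lemma tree_props:
  assumes "T \<in> trees_K_at E K j"
  shows "T \<subseteq> E \<inter> K \<times> K" "indeg1 T" "isroot T j" "\<forall>v\<in>K. (j,v)\<in>T\<^sup>*" "j \<in> K"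
  using assms DT'[of K T j] unfolding trees_K_at_def diverging_tree_at_def by auto

lemma union_in:
  assumes KB: "K \<in> BB" and TK: "T \<in> trees_K_at E K j" and GM: "G \<in> MM' K"
  shows "T \<union> G \<in> MM" "isroot (T \<union> G) j"
proof -
  note tp = tree_props[OF TK]
  have GE: "G \<subseteq> E - E \<inter> (K \<times> K)" and foG: "forest V G"
    and cG: "card (roots V G) = card BB - 1 + card K" using GM unfolding MM'_def by auto
  have GV: "G \<subseteq> V \<times> V" and indG: "indeg1 G" using foG unfolding forest_def by auto
  have GK: "b \<notin> K" if "(a,b)\<in>G" for a b using Kroots[OF KB GE] that unfolding isroot_def by blast
  have KVV: "K \<subseteq> V" using KV[OF KB] .
  define F where "F = T \<union> G"
  have FV: "F \<subseteq> V \<times> V" unfolding F_def using tp(1) GV KVV by auto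
  have indF: "indeg1 F" unfolding indeg1_def F_def
  proof (intro allI impI)
    fix a b c assume ac: "(a,c) \<in> T \<union> G" and bc: "(b,c) \<in> T \<union> G"
    show "a = b"
    proof (cases "c \<in> K")
      case True
      then have "(a,c)\<in>T" "(b,c)\<in>T" using ac bc GK by auto
      then show ?thesis using tp(2) unfolding indeg1_def by blast
    next
      case False
      then have "(a,c)\<in>G" "(b,c)\<in>G" using ac bc tp(1) by auto
      then show ?thesis using indG unfolding indeg1_def by blast
    qed
  qed
  have rjF: "isroot F j" unfolding F_def isroot_def
    using tp(3) Kroots[OF KB GE tp(5)] unfolding isroot_def by auto
  have TF: "T\<^sup>* \<subseteq> F\<^sup>*" unfolding F_def by (rule rtrancl_mono) auto
  have GF: "G\<^sup>* \<subseteq> F\<^sup>*" unfolding F_def by (rule rtrancl_mono) auto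
  have acF: "acyclic F"
  proof (rule acyc_crit[OF FV indF], intro ballI)
    fix v assume vV: "v \<in> V"
    show "\<exists>r. isroot F r \<and> (r,v)\<in>F\<^sup>*"
    proof (cases "v \<in> K")
      case True then show ?thesis using rjF tp(4) TF by blast
    next
      case False
      obtain r where r: "isroot G r" "(r,v)\<in>G\<^sup>*" using root_exists[OF fV foG] by blast
      show ?thesis
      proof (cases "r \<in> K")
        case True
        then have "(j,r)\<in>F\<^sup>*" using tp(4) TF by blast
        moreover have "(r,v)\<in>F\<^sup>*" using r(2) GF by blast
        ultimately show ?thesis using rjF by (meson rtrancl_trans)
      next
        case False
        have "isroot F r" unfolding F_def isroot_def using r(1) False tp(1) unfolding isroot_def by auto
        then show ?thesis using r(2) GF by blast
      qed
    qed
  qed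
  have foF: "forest V F" unfolding forest_def using FV indF acF by simp
  have FE: "F \<subseteq> E" unfolding F_def using tp(1) GE by auto
  have jV: "j \<in> V" using tp(5) KVV by auto
  have req: "roots V F = insert j (roots V G - K)"
  proof
    show "roots V F \<subseteq> insert j (roots V G - K)"
    proof
      fix v assume "v \<in> roots V F"
      then have vV: "v \<in> V" and rv: "isroot F v" unfolding roots_def by auto
      show "v \<in> insert j (roots V G - K)"
      proof (cases "v \<in> K")
        case True
        have "(j,v)\<in>T\<^sup>*" using tp(4) True by blast
        then have "(j,v)\<in>F\<^sup>*" using TF by blast
        then have "v = j" using root_reach[OF rv] by (metis rtranclE rv isroot_def)
        then show ?thesis by simp
      next
        case False
        have "isroot G v" using rv unfolding isroot_def F_def by auto
        then show ?thesis using vV False unfolding roots_def by auto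
      qed
    qed
    show "insert j (roots V G - K) \<subseteq> roots V F"
    proof
      fix v assume v: "v \<in> insert j (roots V G - K)"
      show "v \<in> roots V F"
      proof (cases "v = j")
        case True then show ?thesis using jV rjF unfolding roots_def by simp
      next
        case False
        then have "v \<in> roots V G" "v \<notin> K" using v by auto
        then show ?thesis using tp(1) unfolding roots_def isroot_def F_def by auto
      qed
    qed
  qed
  have fRG: "finite (roots V G)" using fV unfolding roots_def by auto
  have KR: "K \<subseteq> roots V G" using Kroots[OF KB GE] KVV unfolding roots_def by auto
  have "card (roots V G - K) = card (roots V G) - card K"
    using KR fK[OF KB] by (simp add: card_Diff_subset)
  then have c1: "card (roots V G - K) = card BB - 1" using cG by simp
  have "card (roots V F) = Suc (card (roots V G - K))" unfolding req using fRG tp(5) by simp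
  then have "card (roots V F) = card BB" using c1 BB_pos[OF KB] by simp
  then show "T \<union> G \<in> MM" using FE foF unfolding MM_def F_def by simp
  show "isroot (T \<union> G) j" using rjF unfolding F_def .
qed

lemma split_in:
  assumes KB: "K \<in> BB" and jK: "j \<in> K" and FM: "F \<in> MM" and rj: "isroot F j"
  shows "F \<inter> K \<times> K \<in> trees_K_at E K j" "F - K \<times> K \<in> MM' K"
proof -
  have FE: "F \<subseteq> E" and foF: "forest V F" using FM unfolding MM_def by auto
  have indF: "indeg1 F" using foF unfolding forest_def by auto
  have KVV: "K \<subseteq> V" using KV[OF KB] .
  have cl: "x \<in> K" if "(x,y)\<in>F" "y \<in> K" for x y
    using bb_closed[OF BBbb[OF KB]] that FE by blast
  have "diverging_tree_at K (F \<inter> K \<times> K) j"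
  proof (rule DT)
    show "finite K" using fK[OF KB] .
    show "F \<inter> K \<times> K \<subseteq> K \<times> K" by auto
    show "j \<in> K" by (rule jK)
    show "indeg1 (F \<inter> K \<times> K)" using indF unfolding indeg1_def by auto
    show "isroot (F \<inter> K \<times> K) j" using rj unfolding isroot_def by auto
    show "\<forall>v\<in>K. (j, v) \<in> (F \<inter> K \<times> K)\<^sup>*"
    proof
      fix v assume vK: "v \<in> K"
      obtain r where r: "isroot F r" "(r,v)\<in>F\<^sup>*" using root_exists[OF fV foF] by blast
      have rK: "r \<in> K" and rv: "(r,v)\<in>(F \<inter> K \<times> K)\<^sup>*"
        using closed_path[of r v F K] r(2) vK cl by blast+
      have "r \<in> K \<inter> roots V F" using rK KVV r(1) unfolding roots_def by auto
      moreover have "j \<in> K \<inter> roots V F" using jK KVV rj unfolding roots_def by auto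
      ultimately have "r = j" using MM_roots(2)[OF FM KB] by blast
      then show "(j, v) \<in> (F \<inter> K \<times> K)\<^sup>*" using rv by simp
    qed
  qed
  then show "F \<inter> K \<times> K \<in> trees_K_at E K j" unfolding trees_K_at_def using FE by auto
  have "F - K \<times> K \<subseteq> E - E \<inter> (K \<times> K)" using FE by auto
  moreover have "forest V (F - K \<times> K)" using forest_subset[OF foF] by blast
  ultimately show "F - K \<times> K \<in> MM' K" unfolding MM'_def using roots_minusK[OF KB FM jK rj] by simp
qed

lemma path_split:
  assumes "(j,i)\<in>F\<^sup>*" "j \<in> K"
  shows "\<exists>k\<in>K. (k,i)\<in>(F - K \<times> K)\<^sup>*"
  using assms(1)
proof (induction i rule: rtrancl_induct)
  case base then show ?case using assms(2) by blast
next
  case (step y z)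
  show ?case
  proof (cases "z \<in> K")
    case True then show ?thesis by blast
  next
    case False
    obtain k where "k \<in> K" "(k,y)\<in>(F - K \<times> K)\<^sup>*" using step.IH by blast
    moreover have "(y,z)\<in>F - K \<times> K" using step.hyps(2) False by auto
    ultimately show ?thesis by (meson rtrancl.rtrancl_into_rtrancl)
  qed
qed

lemma bij3:
  assumes KB: "K \<in> BB" and jK: "j \<in> K"
  shows "set_weight w {F\<in>MM. isroot F j \<and> (j,i)\<in>F\<^sup>*} =
         set_weight w (trees_K_at E K j) * set_weight w {G\<in>MM' K. \<exists>k\<in>K. (k,i)\<in>G\<^sup>*}"
proof -
  define A1 where "A1 = trees_K_at E K j"
  define A2 where "A2 = {G\<in>MM' K. \<exists>k\<in>K. (k,i)\<in>G\<^sup>*}"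
  define h where "h = (\<lambda>(T::('a\<times>'a) set, G::('a\<times>'a) set). T \<union> G)"
  have A1K: "T \<subseteq> K \<times> K" if "T \<in> A1" for T using tree_props(1)[of T] that unfolding A1_def by auto
  have A2K: "G \<inter> K \<times> K = {}" if "G \<in> A2" for G using that unfolding A2_def MM'_def by auto
  have A1E: "T \<subseteq> E" if "T \<in> A1" for T using tree_props(1)[of T] that unfolding A1_def by auto
  have A2E: "G \<subseteq> E" if "G \<in> A2" for G using that unfolding A2_def MM'_def by auto
  have fA1: "finite A1" using A1E fE by (meson Pow_iff finite_Pow_iff finite_subset subsetI)
  have fA2: "finite A2" using A2E fE by (meson Pow_iff finite_Pow_iff finite_subset subsetI)
  have inj: "inj_on h (A1 \<times> A2)"
  proof (rule inj_onI)
    fix p q assume p: "p \<in> A1 \<times> A2" and q: "q \<in> A1 \<times> A2" and e: "h p = h q"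
    obtain T G where pTG: "p = (T,G)" by (cases p)
    obtain T' G' where qTG: "q = (T',G')" by (cases q)
    have TG: "T \<subseteq> K \<times> K" "G \<inter> K \<times> K = {}" "T' \<subseteq> K \<times> K" "G' \<inter> K \<times> K = {}"
      using p q pTG qTG A1K A2K by auto
    have e': "T \<union> G = T' \<union> G'" using e pTG qTG unfolding h_def by simp
    have "T = (T \<union> G) \<inter> K \<times> K" using TG by auto
    also have "\<dots> = (T' \<union> G') \<inter> K \<times> K" using e' by simp
    also have "\<dots> = T'" using TG by auto
    finally have "T = T'" .
    moreover have "G = (T \<union> G) - K \<times> K" using TG by auto
    moreover have "G' = (T' \<union> G') - K \<times> K" using TG by auto
    ultimately show "p = q" using e' pTG qTG by simp
  qed
  have img: "{F\<in>MM. isroot F j \<and> (j,i)\<in>F\<^sup>*} = h ` (A1 \<times> A2)"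
  proof
    show "{F\<in>MM. isroot F j \<and> (j,i)\<in>F\<^sup>*} \<subseteq> h ` (A1 \<times> A2)"
    proof
      fix F assume "F \<in> {F\<in>MM. isroot F j \<and> (j,i)\<in>F\<^sup>*}"
      then have FM: "F \<in> MM" and rj: "isroot F j" and ji: "(j,i)\<in>F\<^sup>*" by auto
      have "F \<inter> K \<times> K \<in> A1" using split_in(1)[OF KB jK FM rj] unfolding A1_def .
      moreover have "F - K \<times> K \<in> A2" using split_in(2)[OF KB jK FM rj] path_split[OF ji jK]
        unfolding A2_def by simp
      moreover have "F = h (F \<inter> K \<times> K, F - K \<times> K)" unfolding h_def by auto
      ultimately show "F \<in> h ` (A1 \<times> A2)" by blast
    qed
    show "h ` (A1 \<times> A2) \<subseteq> {F\<in>MM. isroot F j \<and> (j,i)\<in>F\<^sup>*}"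
    proof
      fix F assume "F \<in> h ` (A1 \<times> A2)"
      then obtain T G where T: "T \<in> A1" and G: "G \<in> A2" and F: "F = T \<union> G" unfolding h_def by auto
      have TK: "T \<in> trees_K_at E K j" using T unfolding A1_def .
      have GM: "G \<in> MM' K" using G unfolding A2_def by simp
      obtain k where k: "k \<in> K" "(k,i)\<in>G\<^sup>*" using G unfolding A2_def by auto
      have "(j,k)\<in>T\<^sup>*" using tree_props(4)[OF TK] k(1) by blast
      then have "(j,k)\<in>F\<^sup>*" unfolding F by (meson Un_upper1 rtrancl_mono subsetD)
      moreover have "(k,i)\<in>F\<^sup>*" using k(2) unfolding F by (meson Un_upper2 rtrancl_mono subsetD)
      ultimately have "(j,i)\<in>F\<^sup>*" by (meson rtrancl_trans)
      then show "F \<in> {F\<in>MM. isroot F j \<and> (j,i)\<in>F\<^sup>*}"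
        using union_in[OF KB TK GM] F by simp
    qed
  qed
  have "set_weight w {F\<in>MM. isroot F j \<and> (j,i)\<in>F\<^sup>*} = (\<Sum>F\<in>h ` (A1 \<times> A2). sg_weight w F)"
    unfolding set_weight_def img ..
  also have "\<dots> = (\<Sum>p\<in>A1 \<times> A2. sg_weight w (h p))" using sum.reindex[OF inj] by simp
  also have "\<dots> = (\<Sum>p\<in>A1 \<times> A2. sg_weight w (fst p) * sg_weight w (snd p))"
  proof (rule sum.cong)
    fix p assume p: "p \<in> A1 \<times> A2"
    obtain T G where pTG: "p = (T,G)" by (cases p)
    have "T \<inter> G = {}" using p pTG A1K A2K by auto
    moreover have "finite T" using p pTG A1E fE by (meson SigmaD1 finite_subset)
    moreover have "finite G" using p pTG A2E fE by (meson SigmaD2 finite_subset)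
    ultimately have "prod w (T \<union> G) = prod w T * prod w G" by (rule prod.union_disjoint[rotated 2])
    then show "sg_weight w (h p) = sg_weight w (fst p) * sg_weight w (snd p)"
      using pTG unfolding h_def sg_weight_def by simp
  qed simp
  also have "\<dots> = (\<Sum>T\<in>A1. \<Sum>G\<in>A2. sg_weight w T * sg_weight w G)"
    by (simp add: sum.cartesian_product case_prod_beta')
  also have "\<dots> = set_weight w A1 * set_weight w A2"
    unfolding set_weight_def by (simp add: sum_product)
  finally show ?thesis unfolding A1_def A2_def .
qed


lemma fMM: "finite MM"
proof -
  have "MM \<subseteq> Pow E" unfolding MM_def by auto
  then show ?thesis using fE by (meson finite_Pow_iff finite_subset)
qed

lemma MM_ne: "MM \<noteq> {}" using ex_d unfolding MM_def by auto

lemma MM_forest: "F \<in> MM \<Longrightarrow> forest V F" unfolding MM_def by auto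

lemma Jbar_eq:
  assumes iV: "i \<in> V"
  shows "Jbar V E w i j = set_weight w {F\<in>MM. isroot F j \<and> (j,i)\<in>F\<^sup>*} / set_weight w MM"
proof -
  have "{F\<in>max_out_forests V E. in_tree_rooted V F i j} = {F\<in>MM. isroot F j \<and> (j,i)\<in>F\<^sup>*}"
    unfolding MM_eq using itr_iff[OF fV MM_forest iV] by blast
  then show ?thesis unfolding Jbar_def sigma_max_def MM_eq by simp
qed

lemma trees_sum:
  assumes KB: "K \<in> BB"
  shows "set_weight w (trees_K E K) = (\<Sum>k\<in>K. set_weight w (trees_K_at E K k))"
proof -
  have eq: "trees_K E K = (\<Union>k\<in>K. trees_K_at E K k)"
    unfolding trees_K_def trees_K_at_def diverging_tree_def diverging_tree_at_def by auto
  have fin: "finite (trees_K_at E K k)" for k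
  proof -
    have "trees_K_at E K k \<subseteq> Pow E" unfolding trees_K_at_def by auto
    then show ?thesis using fE by (meson finite_Pow_iff finite_subset)
  qed
  have disj: "trees_K_at E K k1 \<inter> trees_K_at E K k2 = {}" if "k1 \<noteq> k2" for k1 k2
  proof (rule ccontr)
    assume "trees_K_at E K k1 \<inter> trees_K_at E K k2 \<noteq> {}"
    then obtain T where T1: "T \<in> trees_K_at E K k1" and T2: "T \<in> trees_K_at E K k2" by blast
    have "(k1,k2)\<in>T\<^sup>*" using tree_props(4)[OF T1] tree_props(5)[OF T2] by blast
    then have "k1 = k2" using root_reach[OF tree_props(3)[OF T2]] by blast
    then show False using that by simp
  qed
  show ?thesis unfolding eq set_weight_def
    by (rule sum.UNION_disjoint) (use fK[OF KB] fin disj in auto)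
qed

context
  fixes w :: "'a \<times> 'a \<Rightarrow> real"
  assumes pos: "\<forall>a\<in>E. w a > 0"
begin

lemma sg_pos: "F \<subseteq> E \<Longrightarrow> sg_weight w F > 0"
  unfolding sg_weight_def using pos by (meson prod_pos subsetD)

lemma sw_nonneg: "\<forall>F\<in>S. F \<subseteq> E \<Longrightarrow> set_weight w S \<ge> 0"
  unfolding set_weight_def using sg_pos by (meson less_eq_real_def sum_nonneg)

lemma sw_pos: "finite S \<Longrightarrow> S \<noteq> {} \<Longrightarrow> \<forall>F\<in>S. F \<subseteq> E \<Longrightarrow> set_weight w S > 0"
  unfolding set_weight_def using sg_pos by (meson sum_pos)

lemma sigma_pos: "set_weight w MM > 0"
  using sw_pos[OF fMM MM_ne] unfolding MM_def by auto

lemma num_fin: "finite {F\<in>MM. P F}" using fMM by simp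

lemma num_sub: "\<forall>F\<in>{F\<in>MM. P F}. F \<subseteq> E" unfolding MM_def by auto

lemma part1a: "i \<in> V \<Longrightarrow> Jbar V E w i j \<ge> 0"
  unfolding Jbar_eq using sw_nonneg[OF num_sub[of "\<lambda>F. isroot F j \<and> (j,i)\<in>F\<^sup>*"]] sigma_pos by simp

lemma part1b:
  assumes iV: "i \<in> V"
  shows "(\<Sum>k\<in>V. Jbar V E w i k) = 1"
proof -
  have uniq: "\<exists>r\<in>V. \<forall>k. (isroot F k \<and> (k,i)\<in>F\<^sup>*) \<longleftrightarrow> k = r" if FM: "F \<in> MM" for F
  proof -
    have fo: "forest V F" using MM_forest[OF FM] .
    obtain r where r: "isroot F r" "(r,i)\<in>F\<^sup>*" using root_exists[OF fV fo] by blast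
    have "r \<in> V" using root_in_V[OF _ r(2) iV] fo unfolding forest_def by auto
    moreover have "(isroot F k \<and> (k,i)\<in>F\<^sup>*) \<longleftrightarrow> k = r" for k
      using roots_eq[of F k r i] r fo unfolding forest_def by auto
    ultimately show ?thesis by blast
  qed
  have "(\<Sum>k\<in>V. set_weight w {F\<in>MM. isroot F k \<and> (k,i)\<in>F\<^sup>*})
      = (\<Sum>k\<in>V. \<Sum>F\<in>MM. if isroot F k \<and> (k,i)\<in>F\<^sup>* then sg_weight w F else 0)"
    unfolding set_weight_def by (simp add: sum.inter_filter[OF fMM])
  also have "\<dots> = (\<Sum>F\<in>MM. \<Sum>k\<in>V. if isroot F k \<and> (k,i)\<in>F\<^sup>* then sg_weight w F else 0)"
    by (rule sum.swap)
  also have "\<dots> = (\<Sum>F\<in>MM. sg_weight w F)"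
  proof (rule sum.cong[OF refl])
    fix F assume "F \<in> MM"
    then obtain r where r: "r \<in> V" "\<forall>k. (isroot F k \<and> (k,i)\<in>F\<^sup>*) \<longleftrightarrow> k = r" using uniq by blast
    have "(\<Sum>k\<in>V. if isroot F k \<and> (k,i)\<in>F\<^sup>* then sg_weight w F else 0)
        = (\<Sum>k\<in>V. if k = r then sg_weight w F else 0)" using r(2) by simp
    also have "\<dots> = sg_weight w F" using r(1) fV by simp
    finally show "(\<Sum>k\<in>V. if isroot F k \<and> (k,i)\<in>F\<^sup>* then sg_weight w F else 0) = sg_weight w F" .
  qed
  finally have "(\<Sum>k\<in>V. set_weight w {F\<in>MM. isroot F k \<and> (k,i)\<in>F\<^sup>*}) = set_weight w MM"
    unfolding set_weight_def .
  then show ?thesis unfolding Jbar_eq[OF iV] using sigma_pos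
    by (simp add: sum_divide_distrib[symmetric])
qed

lemma part2:
  assumes iV: "i \<in> V"
  shows "Jbar V E w i j \<noteq> 0 \<longleftrightarrow> j \<in> \<Union>BB \<and> (j,i)\<in>E\<^sup>*"
proof -
  have "Jbar V E w i j \<noteq> 0 \<longleftrightarrow> {F\<in>MM. isroot F j \<and> (j,i)\<in>F\<^sup>*} \<noteq> {}"
  proof
    assume h: "Jbar V E w i j \<noteq> 0"
    show "{F\<in>MM. isroot F j \<and> (j,i)\<in>F\<^sup>*} \<noteq> {}"
    proof
      assume e: "{F\<in>MM. isroot F j \<and> (j,i)\<in>F\<^sup>*} = {}"
      have "set_weight w {F\<in>MM. isroot F j \<and> (j,i)\<in>F\<^sup>*} = 0"
        unfolding set_weight_def e by (rule sum.empty)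
      then have "Jbar V E w i j = 0" unfolding Jbar_eq[OF iV] by (rule ssubst) (rule div_0)
      then show False using h by (rule notE[rotated])
    qed
  next
    assume "{F\<in>MM. isroot F j \<and> (j,i)\<in>F\<^sup>*} \<noteq> {}"
    then have "set_weight w {F\<in>MM. isroot F j \<and> (j,i)\<in>F\<^sup>*} > 0"
      using sw_pos[OF num_fin[of "\<lambda>F. isroot F j \<and> (j,i)\<in>F\<^sup>*"] _ num_sub[of "\<lambda>F. isroot F j \<and> (j,i)\<in>F\<^sup>*"]] by simp
    then show "Jbar V E w i j \<noteq> 0" unfolding Jbar_eq[OF iV] using sigma_pos by simp
  qed
  also have "\<dots> \<longleftrightarrow> j \<in> \<Union>BB \<and> (j,i)\<in>E\<^sup>*"
  proof
    assume "{F\<in>MM. isroot F j \<and> (j,i)\<in>F\<^sup>*} \<noteq> {}"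
    then obtain F where FM: "F \<in> MM" and rj: "isroot F j" and ji: "(j,i)\<in>F\<^sup>*" by blast
    have FE: "F \<subseteq> E" and fo: "forest V F" using FM unfolding MM_def by auto
    have "j \<in> V" using root_in_V[OF _ ji iV] fo unfolding forest_def by auto
    then have "j \<in> roots V F" using rj unfolding roots_def by simp
    then obtain K where "K \<in> BB" "j \<in> K" using MM_roots(1)[OF FM] by blast
    moreover have "(j,i)\<in>E\<^sup>*" using ji FE by (meson rtrancl_mono subsetD)
    ultimately show "j \<in> \<Union>BB \<and> (j,i)\<in>E\<^sup>*" by blast
  next
    assume "j \<in> \<Union>BB \<and> (j,i)\<in>E\<^sup>*"
    then obtain K where "K \<in> BB" "j \<in> K" "(j,i)\<in>E\<^sup>*" by blast
    then show "{F\<in>MM. isroot F j \<and> (j,i)\<in>F\<^sup>*} \<noteq> {}" using ex_tree[OF _ _ iV] by blast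
  qed
  finally show ?thesis .
qed

lemma PK_eq:
  assumes KB: "K \<in> BB"
  shows "P_K_to V E K i = {G\<in>MM' K. \<exists>k\<in>K. (k,i)\<in>G\<^sup>*}"
  unfolding P_K_to_def MM'_eq[OF KB] ..

lemma part3a:
  assumes KB: "K \<in> BB" and jK: "j \<in> K" and iV: "i \<in> V"
  shows "Jbar V E w i j = set_weight w (trees_K_at E K j) * set_weight w (P_K_to V E K i) / sigma_max V E w"
  unfolding Jbar_eq[OF iV] sigma_max_def MM_eq bij3[OF KB jK] PK_eq[OF KB] ..

lemma PK_self:
  assumes KB: "K \<in> BB" and jK: "j \<in> K"
  shows "P_K_to V E K j = MM' K"
  unfolding PK_eq[OF KB] using jK by blast

lemma sigma_split:
  assumes KB: "K \<in> BB"
  shows "set_weight w MM = set_weight w (trees_K E K) * set_weight w (MM' K)"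
proof -
  obtain j where jK: "j \<in> K" using bb_ne[OF BBbb[OF KB]] by blast
  have jV: "j \<in> V" using jK KV[OF KB] by auto
  have zero: "Jbar V E w j k = 0" if "k \<in> V - K" for k
  proof (rule ccontr)
    assume "Jbar V E w j k \<noteq> 0"
    then have "(k,j)\<in>E\<^sup>*" using part2[OF jV] by blast
    then have "k \<in> K" using bb_closed_star[OF BBbb[OF KB] _ jK] by blast
    then show False using that by simp
  qed
  have "1 = (\<Sum>k\<in>V. Jbar V E w j k)" using part1b[OF jV] by simp
  also have "\<dots> = (\<Sum>k\<in>K. Jbar V E w j k)"
    by (rule sum.mono_neutral_right[OF fV KV[OF KB]]) (use zero in blast)
  also have "\<dots> = (\<Sum>k\<in>K. set_weight w (trees_K_at E K k) * set_weight w (MM' K) / set_weight w MM)"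
    by (rule sum.cong[OF refl]) (simp add: part3a[OF KB _ jV] PK_self[OF KB jK] sigma_max_def MM_eq)
  also have "\<dots> = set_weight w (trees_K E K) * set_weight w (MM' K) / set_weight w MM"
    unfolding trees_sum[OF KB] by (simp add: sum_divide_distrib[symmetric] sum_distrib_right)
  finally show ?thesis using sigma_pos by (simp add: field_simps)
qed

lemma part3b:
  assumes KB: "K \<in> BB" and jK: "j \<in> K" and iK: "i \<in> K_plus V E K"
  shows "Jbar V E w i j = Jbar V E w j j \<and>
         Jbar V E w j j = set_weight w (trees_K_at E K j) / set_weight w (trees_K E K)"
proof -
  have iV: "i \<in> V" using iK unfolding K_plus_def by auto
  have jV: "j \<in> V" using jK KV[OF KB] by auto
  have "P_K_to V E K i = MM' K"
  proof
    show "P_K_to V E K i \<subseteq> MM' K" unfolding PK_eq[OF KB] by blast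
    show "MM' K \<subseteq> P_K_to V E K i"
    proof
      fix G assume GM: "G \<in> MM' K"
      have GE: "G \<subseteq> E - E \<inter> (K \<times> K)" and fo: "forest V G" using GM unfolding MM'_def by auto
      obtain r where r: "isroot G r" "(r,i)\<in>G\<^sup>*" using root_exists[OF fV fo] by blast
      have rV: "r \<in> V" using root_in_V[OF _ r(2) iV] fo unfolding forest_def by auto
      have "r \<in> K"
      proof (rule ccontr)
        assume "r \<notin> K"
        then obtain K' where K': "K' \<in> BB" "K' \<noteq> K" "r \<in> K'"
          using MM'_roots[OF KB GM _ \<open>r\<notin>K\<close>] rV r(1) unfolding roots_def by blast
        have "(r,i)\<in>E\<^sup>*" using r(2) GE by (meson Diff_subset rtrancl_mono subset_trans subsetD)
        then show False using iK K' unfolding K_plus_def BB_def by blast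
      qed
      then show "G \<in> P_K_to V E K i" unfolding PK_eq[OF KB] using GM r(2) by blast
    qed
  qed
  then have PP: "P_K_to V E K i = P_K_to V E K j" using PK_self[OF KB jK] by simp
  have e1: "Jbar V E w i j = Jbar V E w j j"
    using part3a[OF KB jK iV] part3a[OF KB jK jV] PP by simp
  have s: "set_weight w MM = set_weight w (trees_K E K) * set_weight w (MM' K)" by (rule sigma_split[OF KB])
  have nz: "set_weight w (MM' K) \<noteq> 0" "set_weight w (trees_K E K) \<noteq> 0" using s sigma_pos by auto
  have "Jbar V E w j j = set_weight w (trees_K_at E K j) * set_weight w (MM' K) /
          (set_weight w (trees_K E K) * set_weight w (MM' K))"
    using part3a[OF KB jK jV] PK_self[OF KB jK] s unfolding sigma_max_def MM_eq by simp
  also have "\<dots> = set_weight w (trees_K_at E K j) / set_weight w (trees_K E K)" using nz by simp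
  finally show ?thesis using e1 by simp
qed

lemma part4:
  assumes KB: "K \<in> BB"
  shows "(\<Sum>j\<in>K. Jbar V E w j j) = 1"
proof -
  have s: "set_weight w MM = set_weight w (trees_K E K) * set_weight w (MM' K)" by (rule sigma_split[OF KB])
  have nz: "set_weight w (trees_K E K) \<noteq> 0" using s sigma_pos by auto
  have nz2: "set_weight w (MM' K) \<noteq> 0" using s sigma_pos by auto
  have "(\<Sum>j\<in>K. Jbar V E w j j) = (\<Sum>j\<in>K. set_weight w (trees_K_at E K j) / set_weight w (trees_K E K))"
  proof (rule sum.cong[OF refl])
    fix j assume jK: "j \<in> K"
    have jV: "j \<in> V" using jK KV[OF KB] by auto
    have "Jbar V E w j j = set_weight w (trees_K_at E K j) * set_weight w (MM' K) /
          (set_weight w (trees_K E K) * set_weight w (MM' K))"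
      using part3a[OF KB jK jV] PK_self[OF KB jK] s unfolding sigma_max_def MM_eq by simp
    also have "\<dots> = set_weight w (trees_K_at E K j) / set_weight w (trees_K E K)"
      using nz2 by simp
    finally show "Jbar V E w j j = set_weight w (trees_K_at E K j) / set_weight w (trees_K E K)" .
  qed
  also have "\<dots> = 1" using nz trees_sum[OF KB] by (simp add: sum_divide_distrib[symmetric])
  finally show ?thesis .
qed

lemma part5:
  assumes KB: "K \<in> BB" and j1: "j1 \<in> K" and j2: "j2 \<in> K" and iV: "i \<in> V"
  shows "Jbar V E w i j2 = set_weight w (trees_K_at E K j2) / set_weight w (trees_K_at E K j1) * Jbar V E w i j1"
proof -
  have j1V: "j1 \<in> V" using j1 KV[OF KB] by auto
  have s: "set_weight w MM = set_weight w (trees_K E K) * set_weight w (MM' K)" by (rule sigma_split[OF KB])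
  have "Jbar V E w j1 j1 \<noteq> 0" using part2[OF j1V] KB j1 by blast
  then have nz: "set_weight w (trees_K_at E K j1) \<noteq> 0"
    using part3a[OF KB j1 j1V] by auto
  show ?thesis using part3a[OF KB j1 iV] part3a[OF KB j2 iV] nz by (simp add: field_simps)
qed

end

end

theorem theorem2:
  fixes n :: nat and E :: "(nat \<times> nat) set" and w :: "nat \<times> nat \<Rightarrow> real"
  assumes arcs: "E \<subseteq> {(j, i). j \<in> {1..n} \<and> i \<in> {1..n} \<and> j \<noteq> i}"
    and pos: "\<forall>a\<in>E. w a > 0"
  shows
    "((\<forall>i\<in>{1..n}. \<forall>j\<in>{1..n}. Jbar {1..n} E w i j \<ge> 0) \<and>
      (\<forall>i\<in>{1..n}. (\<Sum>k\<in>{1..n}. Jbar {1..n} E w i k) = 1))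
   \<and>
     (\<forall>i\<in>{1..n}. \<forall>j\<in>{1..n}.
        Jbar {1..n} E w i j \<noteq> 0 \<longleftrightarrow> j \<in> K_tilde {1..n} E \<and> (j, i) \<in> E\<^sup>*)
   \<and>
     (\<forall>K. basis_bicomp {1..n} E K \<longrightarrow>
       (\<forall>j\<in>K. \<forall>i\<in>{1..n}.
          Jbar {1..n} E w i j =
            set_weight w (trees_K_at E K j) * set_weight w (P_K_to {1..n} E K i)
              / sigma_max {1..n} E w) \<and>
       (\<forall>j\<in>K. \<forall>i\<in>K_plus {1..n} E K.
          Jbar {1..n} E w i j = Jbar {1..n} E w j j \<and>
          Jbar {1..n} E w j j = set_weight w (trees_K_at E K j) / set_weight w (trees_K E K)))
   \<and>
     ((\<forall>K. basis_bicomp {1..n} E K \<longrightarrow> (\<Sum>j\<in>K. Jbar {1..n} E w j j) = 1) \<and>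
      (\<forall>j\<in>{1..n}. undominated {1..n} E j \<longrightarrow> Jbar {1..n} E w j j = 1))
   \<and>
     (\<forall>K. basis_bicomp {1..n} E K \<longrightarrow> (\<forall>j1\<in>K. \<forall>j2\<in>K. \<forall>i\<in>{1..n}.
        Jbar {1..n} E w i j2 =
          set_weight w (trees_K_at E K j2) / set_weight w (trees_K_at E K j1) * Jbar {1..n} E w i j1))"
proof -
  let ?V = "{1..n} :: nat set"
  have fV: "finite ?V" by simp
  have EV: "E \<subseteq> ?V \<times> ?V" using arcs by auto
  have KB: "K \<in> BB ?V E" if "basis_bicomp ?V E K" for K using that by (rule BBI[OF fV EV])
  have KT: "K_tilde ?V E = \<Union>(BB ?V E)" by (rule KT_eq[OF fV EV])
  have P1: "(\<forall>i\<in>?V. \<forall>j\<in>?V. Jbar ?V E w i j \<ge> 0) \<and> (\<forall>i\<in>?V. (\<Sum>k\<in>?V. Jbar ?V E w i k) = 1)"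
    using part1a[OF fV EV pos] part1b[OF fV EV pos] by blast
  have P2: "\<forall>i\<in>?V. \<forall>j\<in>?V. Jbar ?V E w i j \<noteq> 0 \<longleftrightarrow> j \<in> K_tilde ?V E \<and> (j, i) \<in> E\<^sup>*"
    unfolding KT using part2[OF fV EV pos] by blast
  have P3: "\<forall>K. basis_bicomp ?V E K \<longrightarrow>
       (\<forall>j\<in>K. \<forall>i\<in>?V.
          Jbar ?V E w i j =
            set_weight w (trees_K_at E K j) * set_weight w (P_K_to ?V E K i)
              / sigma_max ?V E w) \<and>
       (\<forall>j\<in>K. \<forall>i\<in>K_plus ?V E K.
          Jbar ?V E w i j = Jbar ?V E w j j \<and>
          Jbar ?V E w j j = set_weight w (trees_K_at E K j) / set_weight w (trees_K E K))"
  proof (intro allI impI conjI ballI)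
    fix K j i assume bb: "basis_bicomp ?V E K" and jK: "j \<in> K" and iV: "i \<in> ?V"
    show "Jbar ?V E w i j = set_weight w (trees_K_at E K j) * set_weight w (P_K_to ?V E K i) / sigma_max ?V E w"
      by (rule part3a[OF fV EV pos KB[OF bb] jK iV])
  next
    fix K j i assume bb: "basis_bicomp ?V E K" and jK: "j \<in> K" and iK: "i \<in> K_plus ?V E K"
    show "Jbar ?V E w i j = Jbar ?V E w j j" using part3b[OF fV EV pos KB[OF bb] jK iK] by blast
    show "Jbar ?V E w j j = set_weight w (trees_K_at E K j) / set_weight w (trees_K E K)"
      using part3b[OF fV EV pos KB[OF bb] jK iK] by blast
  qed
  have P4: "(\<forall>K. basis_bicomp ?V E K \<longrightarrow> (\<Sum>j\<in>K. Jbar ?V E w j j) = 1) \<and>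
      (\<forall>j\<in>?V. undominated ?V E j \<longrightarrow> Jbar ?V E w j j = 1)"
  proof (intro conjI allI impI ballI)
    fix K assume bb: "basis_bicomp ?V E K"
    show "(\<Sum>j\<in>K. Jbar ?V E w j j) = 1" by (rule part4[OF fV EV pos KB[OF bb]])
  next
    fix j assume "j \<in> ?V" and u: "undominated ?V E j"
    from u have bb: "basis_bicomp ?V E {j}" unfolding undominated_def .
    show "Jbar ?V E w j j = 1" using part4[OF fV EV pos KB[OF bb]] by simp
  qed
  have P5: "\<forall>K. basis_bicomp ?V E K \<longrightarrow> (\<forall>j1\<in>K. \<forall>j2\<in>K. \<forall>i\<in>?V.
        Jbar ?V E w i j2 =
          set_weight w (trees_K_at E K j2) / set_weight w (trees_K_at E K j1) * Jbar ?V E w i j1)"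
  proof (intro allI impI ballI)
    fix K j1 j2 i assume bb: "basis_bicomp ?V E K" and "j1 \<in> K" "j2 \<in> K" "i \<in> ?V"
    then show "Jbar ?V E w i j2 =
          set_weight w (trees_K_at E K j2) / set_weight w (trees_K_at E K j1) * Jbar ?V E w i j1"
      using part5[OF fV EV pos KB[OF bb]] by blast
  qed
  show ?thesis using P1 P2 P3 P4 P5 by blast
qed

end
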